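(* Let $\mu\in\mathcal P_\varnothing(nl)$ have Frobenius form $(a_1,\dots,a_k\mid b_1,\dots,b_k)$ and let $j\in\{0,\dots,l-1\}$. Then \[t^{e_j}\,\mathrm{Res}_{\mathsf{Eig}(\mu)^j}(t^h)=\sum_{1\le i\le k,\ \mathsf{type}_\mu(A,i)=j}\Xi_\mu(A,i)\;+\sum_{1\le i\le k,\ \mathsf{type}_\mu(L,i)=j}\Xi_\mu(L,i).\]
   Context: Let $\mathbf h=(h,H_1,\dots,H_{l-1})\in\mathbb{Q}^l$ be generic (in particular $\mathrm{Spec}$ of the centre of the rational Cherednik algebra of $(\mathbb{Z}/l\mathbb{Z})\wr S_n$ at this parameter is smooth). Let $H_0=-\sum_{i\ge1}H_i$ and $\theta=(-h+H_0,H_1,\dots,H_{l-1})$, with indices mod $l$. Define $e_0=0$ and $e_i=H_1+\dots+H_i$ for $1\le i\le l-1$. Define $e'_0=-h$, $e'_i=e_i$ for $i\ge1$, $e''_{l-1}=0$, and $e''_i=h+\sum_{j=1}^{l-i-1}H_j$ for $0\le i\le l-2$. For a partition $\lambda$, $\mathrm{Res}_\lambda(t)=\sum_{\square\in\lambda}t^{c(\square)}$ with $c(i,j)=j-i$; $t^{e}\mathrm{Res}_\lambda(t^h)$ means $\sum_{\square}t^{e+hc(\square)}$. $\mathcal P_\varnothing(nl)$ is the set of partitions of $nl$ with empty $l$-core. The Frobenius form has $a_i=\mu_i-i$ and $b_i=\mu_i^t-i$. Set $\mathsf{type}_\mu(L,i)=b_i\bmod l$ and $\mathsf{type}_\mu(A,i)=-(a_i+1)\bmod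 l$. Set $\Xi_\mu(L,i)=t^{e'_{b_i}}\sum_{j=1}^{\lceil b_i/l\rceil}t^{-(j-1)h}$ and $\Xi_\mu(A,i)=t^{e''_{a_i}}\sum_{j=1}^{\lfloor(a_i+1)/l\rfloor}t^{(j-1)h}$ (subscripts mod $l$). Define $\mathrm{Eig}(\mu)=\sum_i\mathrm{Eig}(\mu,i)$, where $\mathrm{Eig}(\mu,i)=\sum_{1\le j\le m_i,\ j\equiv r_i-1\ (l)}t^{\alpha_j^{(i)}}$, $r_i=b_i+1$, $m_i=a_i+b_i+1$, $\alpha^{(i)}_{m_i}=0$, and for $j<m_i$: $\alpha^{(i)}_j=\sum_{s=1}^j\theta_{r_i-s}$ if $j<r_i$, $\alpha^{(i)}_j=-\sum_{s=0}^{m_i-j-1}\theta_{-m_i+r_i+s}$ if $j\ge r_i$. $\underline{\mathsf{Eig}}(\mu)=(\mathsf{Eig}(\mu)^0,\dots,\mathsf{Eig}(\mu)^{l-1})$ is the unique $l$-multipartition of $n$ with $\sum_{j}t^{e_j}\mathrm{Res}_{\mathsf{Eig}(\mu)^j}(t^h)=\mathrm{Eig}(\mu)$. The paper establishes its existence and uniqueness for generic $\mathbf h$. *)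

theory Defs
  imports Complex_Main "HOL-Library.Multiset"
begin

definition is_partition :: "nat list \<Rightarrow> bool" where
  "is_partition p \<longleftrightarrow> sorted_wrt (\<ge>) p \<and> 0 \<notin> set p"

definition psize :: "nat list \<Rightarrow> nat" where
  "psize p = sum_list p"

definition part :: "nat list \<Rightarrow> nat \<Rightarrow> nat" where
  "part p i = (if 1 \<le> i \<and> i \<le> length p then p ! (i - 1) else 0)"

text \<open>Young diagram: boxes (i,j), row i, column j, both 1-indexed.\<close>
definition diagram :: "nat list \<Rightarrow> (nat \<times> nat) set" where
  "diagram p = {(i, j). 1 \<le> i \<and> i \<le> length p \<and> 1 \<le> j \<and> j \<le> part p i}"

text \<open>Multiset of contents c(i,j) = j - i of the boxes; this encodes Res_\<lambda>(t).\<close>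
definition contents :: "nat list \<Rightarrow> int multiset" where
  "contents p = image_mset (\<lambda>(i, j). int j - int i) (mset_set (diagram p))"

text \<open>t^e Res_\<lambda>(t^h), as the multiset of exponents of t.\<close>
definition shifted_res :: "rat \<Rightarrow> rat \<Rightarrow> nat list \<Rightarrow> rat multiset" where
  "shifted_res e h p = image_mset (\<lambda>c. e + h * of_int c) (contents p)"

definition box_adj :: "nat \<times> nat \<Rightarrow> nat \<times> nat \<Rightarrow> bool" where
  "box_adj x y \<longleftrightarrow> \<bar>int (fst x) - int (fst y)\<bar> + \<bar>int (snd x) - int (snd y)\<bar> = 1"

definition connected_boxes :: "(nat \<times> nat) set \<Rightarrow> bool" where
  "connected_boxes D \<longleftrightarrow>
     (\<forall>x\<in>D. \<forall>y\<in>D. (\<lambda>u v. u \<in> D \<and> v \<in> D \<and> box_adj u v)\<^sup>*\<^sup>* x y)"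

definition rim_hook :: "nat \<Rightarrow> nat list \<Rightarrow> nat list \<Rightarrow> bool" where
  "rim_hook l p q \<longleftrightarrow> is_partition p \<and> is_partition q \<and> diagram q \<subseteq> diagram p \<and>
     card (diagram p - diagram q) = l \<and>
     connected_boxes (diagram p - diagram q) \<and>
     \<not> (\<exists>i j. {(i, j), (i, Suc j), (Suc i, j), (Suc i, Suc j)} \<subseteq> diagram p - diagram q)"

text \<open>The l-core of \<lambda> is empty iff successive removal of l-rim hooks can reach the
  empty partition (the l-core does not depend on the order of removals).\<close>
inductive empty_core :: "nat \<Rightarrow> nat list \<Rightarrow> bool" for l where
  empty: "empty_core l []"
| step: "rim_hook l p q \<Longrightarrow> empty_core l q \<Longrightarrow> empty_core l p"

definition P_empty :: "nat \<Rightarrow> nat \<Rightarrow> nat list set" where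
  "P_empty l m = {\<mu>. is_partition \<mu> \<and> psize \<mu> = m \<and> empty_core l \<mu>}"

definition conj_part :: "nat list \<Rightarrow> nat \<Rightarrow> nat" where
  "conj_part \<mu> i = card {r \<in> {1..length \<mu>}. i \<le> part \<mu> r}"

definition durfee :: "nat list \<Rightarrow> nat" where
  "durfee \<mu> = card {i \<in> {1..length \<mu>}. i \<le> part \<mu> i}"

definition frob_a :: "nat list \<Rightarrow> nat \<Rightarrow> nat" where
  "frob_a \<mu> i = part \<mu> i - i"

definition frob_b :: "nat list \<Rightarrow> nat \<Rightarrow> nat" where
  "frob_b \<mu> i = conj_part \<mu> i - i"

text \<open>h :: rat, H i for 1 \<le> i \<le> l-1 (values of H outside this range are irrelevant).\<close>

definition H0 :: "nat \<Rightarrow> (nat \<Rightarrow> rat) \<Rightarrow> rat" where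
  "H0 l H = - (\<Sum>i=1..l-1. H i)"

definition theta :: "nat \<Rightarrow> rat \<Rightarrow> (nat \<Rightarrow> rat) \<Rightarrow> int \<Rightarrow> rat" where
  "theta l h H k = (let r = nat (k mod int l) in if r = 0 then - h + H0 l H else H r)"

definition ee :: "(nat \<Rightarrow> rat) \<Rightarrow> nat \<Rightarrow> rat" where
  "ee H i = (\<Sum>s=1..i. H s)"

definition ee' :: "rat \<Rightarrow> (nat \<Rightarrow> rat) \<Rightarrow> nat \<Rightarrow> rat" where
  "ee' h H i = (if i = 0 then - h else ee H i)"

definition ee'' :: "nat \<Rightarrow> rat \<Rightarrow> (nat \<Rightarrow> rat) \<Rightarrow> nat \<Rightarrow> rat" where
  "ee'' l h H i = (if i = l - 1 then 0 else h + (\<Sum>j=1..l-i-1. H j))"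

definition typeL :: "nat \<Rightarrow> nat list \<Rightarrow> nat \<Rightarrow> nat" where
  "typeL l \<mu> i = frob_b \<mu> i mod l"

definition typeA :: "nat \<Rightarrow> nat list \<Rightarrow> nat \<Rightarrow> nat" where
  "typeA l \<mu> i = nat ((- (int (frob_a \<mu> i) + 1)) mod int l)"

definition XiL :: "nat \<Rightarrow> rat \<Rightarrow> (nat \<Rightarrow> rat) \<Rightarrow> nat list \<Rightarrow> nat \<Rightarrow> rat multiset" where
  "XiL l h H \<mu> i =
     mset (map (\<lambda>j. ee' h H (frob_b \<mu> i mod l) - (of_nat j - 1) * h)
               [1..<nat \<lceil>(of_nat (frob_b \<mu> i) :: rat) / of_nat l\<rceil> + 1])"

definition XiA :: "nat \<Rightarrow> rat \<Rightarrow> (nat \<Rightarrow> rat) \<Rightarrow> nat list \<Rightarrow> nat \<Rightarrow> rat multiset" where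
  "XiA l h H \<mu> i =
     mset (map (\<lambda>j. ee'' l h H (frob_a \<mu> i mod l) + (of_nat j - 1) * h)
               [1..<nat \<lfloor>(of_nat (frob_a \<mu> i + 1) :: rat) / of_nat l\<rfloor> + 1])"

definition alpha :: "nat \<Rightarrow> rat \<Rightarrow> (nat \<Rightarrow> rat) \<Rightarrow> int \<Rightarrow> int \<Rightarrow> int \<Rightarrow> rat" where
  "alpha l h H r m j =
     (if j = m then 0
      else if j < r then (\<Sum>s\<in>{1..j}. theta l h H (r - s))
      else - (\<Sum>s\<in>{0..m - j - 1}. theta l h H (- m + r + s)))"

definition Eig_i :: "nat \<Rightarrow> rat \<Rightarrow> (nat \<Rightarrow> rat) \<Rightarrow> nat list \<Rightarrow> nat \<Rightarrow> rat multiset" where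
  "Eig_i l h H \<mu> i =
     (let r = int (frob_b \<mu> i) + 1; m = int (frob_a \<mu> i) + int (frob_b \<mu> i) + 1 in
      mset (map (alpha l h H r m) (filter (\<lambda>j. j mod int l = (r - 1) mod int l) [1..m])))"

definition Eig :: "nat \<Rightarrow> rat \<Rightarrow> (nat \<Rightarrow> rat) \<Rightarrow> nat list \<Rightarrow> rat multiset" where
  "Eig l h H \<mu> = (\<Sum>i\<in>{1..durfee \<mu>}. Eig_i l h H \<mu> i)"

definition is_multipartition :: "nat \<Rightarrow> nat \<Rightarrow> (nat \<Rightarrow> nat list) \<Rightarrow> bool" where
  "is_multipartition l n P \<longleftrightarrow> (\<forall>j<l. is_partition (P j)) \<and> (\<forall>j\<ge>l. P j = []) \<and>
     (\<Sum>j<l. psize (P j)) = n"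

definition EigMP :: "nat \<Rightarrow> nat \<Rightarrow> rat \<Rightarrow> (nat \<Rightarrow> rat) \<Rightarrow> nat list \<Rightarrow> nat \<Rightarrow> nat list" where
  "EigMP l n h H \<mu> = (THE P. is_multipartition l n P \<and>
      (\<Sum>j<l. shifted_res (ee H j) h (P j)) = Eig l h H \<mu>)"

text \<open>A (proper) affine hyperplane in the parameter space Q^l of (h, H_1..H_{l-1}),
  given by c0 + ch*h + \<Sum> cH i * H i = 0 with nonzero linear part.\<close>
definition proper_form :: "nat \<Rightarrow> rat \<times> rat \<times> (nat \<Rightarrow> rat) \<Rightarrow> bool" where
  "proper_form l f = (case f of (c0, ch, cH) \<Rightarrow> \<not> (ch = 0 \<and> (\<forall>i\<in>{1..l-1}. cH i = 0)))"

definition eval_form :: "nat \<Rightarrow> rat \<times> rat \<times> (nat \<Rightarrow> rat) \<Rightarrow> rat \<Rightarrow> (nat \<Rightarrow> rat) \<Rightarrow> rat" where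
  "eval_form l f h H = (case f of (c0, ch, cH) \<Rightarrow> c0 + ch * h + (\<Sum>i=1..l-1. cH i * H i))"

end

theory Submission
  imports Defs
begin

lemma diagram_alt: "diagram p = {(i, j). 1 \<le> i \<and> 1 \<le> j \<and> j \<le> part p i}"
  unfolding diagram_def part_def by (auto split: if_splits)

lemma diagram_Sigma: "diagram p = (SIGMA i:{1..length p}. {1..part p i})"
  unfolding diagram_def by auto

lemma finite_diagram[simp]: "finite (diagram p)"
  unfolding diagram_Sigma by auto

lemma sum_part: "(\<Sum>i=1..length p. part p i) = sum_list p"
proof -
  have "(\<Sum>i=1..length p. part p i) = (\<Sum>i<length p. p ! i)"
    by (rule sum.reindex_bij_witness[where i="\<lambda>i. i+1" and j="\<lambda>i. i - 1"])
       (auto simp: part_def)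
  then show ?thesis by (simp add: sum_list_sum_nth lessThan_atLeast0)
qed

lemma card_diagram: "card (diagram p) = psize p"
  unfolding diagram_Sigma psize_def using sum_part[of p] by (simp add: card_SigmaI)

lemma size_contents: "size (contents p) = psize p"
  unfolding contents_def by (simp add: card_diagram)

lemma part_mono:
  assumes "is_partition p" "1 \<le> i" "i \<le> i'"
  shows "part p i' \<le> part p i"
proof (cases "i' \<le> length p")
  case True
  have s: "sorted_wrt (\<ge>) p" using assms(1) by (simp add: is_partition_def)
  have "p ! (i' - 1) \<le> p ! (i - 1)"
  proof (cases "i = i'")
    case False
    then show ?thesis using s True assms(2,3) by (auto simp: sorted_wrt_iff_nth_less)
  qed simp
  then show ?thesis using True assms by (auto simp: part_def)
next
  case False then show ?thesis by (simp add: part_def)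
qed

lemma part_pos: "is_partition p \<Longrightarrow> 1 \<le> i \<Longrightarrow> i \<le> length p \<Longrightarrow> 0 < part p i"
proof -
  assume "is_partition p" "1 \<le> i" "i \<le> length p"
  then have "p ! (i - 1) \<in> set p" by simp
  then show ?thesis using \<open>is_partition p\<close> \<open>1 \<le> i\<close> \<open>i \<le> length p\<close>
    unfolding is_partition_def part_def by (metis gr0I)
qed

lemma part_gt0_iff: "is_partition p \<Longrightarrow> 1 \<le> i \<Longrightarrow> (0 < part p i) = (i \<le> length p)"
  using part_pos by (auto simp: part_def split: if_splits)

lemma diagram_down:
  assumes "is_partition p" "(i, j) \<in> diagram p" "1 \<le> i'" "i' \<le> i" "1 \<le> j'" "j' \<le> j"
  shows "(i', j') \<in> diagram p"
  using assms part_mono[OF assms(1) assms(3) assms(4)] by (auto simp: diagram_alt)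

lemma count_image_mset_set:
  assumes "finite A"
  shows "count (image_mset f (mset_set A)) x = card {a\<in>A. f a = x}"
proof -
  have "count (image_mset f (mset_set A)) x = sum (count (mset_set A)) (f -` {x} \<inter> A)"
    using assms by (simp add: count_image_mset)
  also have "\<dots> = sum (\<lambda>_. 1) (f -` {x} \<inter> A)"
    by (rule sum.cong) (use assms in auto)
  also have "\<dots> = card (f -` {x} \<inter> A)" by simp
  also have "f -` {x} \<inter> A = {a\<in>A. f a = x}" by auto
  finally show ?thesis .
qed

lemma count_contents:
  "count (contents p) c = card {b \<in> diagram p. int (snd b) - int (fst b) = c}"
proof -
  have "count (contents p) c = count (image_mset (\<lambda>(i, j). int j - int i) (mset_set (diagram p))) c"
    by (simp add: contents_def)
  also have "\<dots> = card {b \<in> diagram p. int (snd b) - int (fst b) = c}"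
    by (simp add: count_image_mset_set case_prod_beta)
  finally show ?thesis .
qed


lemma initseg:
  fixes S :: "nat set"
  assumes fin: "finite S" and pos: "\<And>r. r \<in> S \<Longrightarrow> 1 \<le> r"
    and down: "\<And>r r'. r \<in> S \<Longrightarrow> 1 \<le> r' \<Longrightarrow> r' \<le> r \<Longrightarrow> r' \<in> S"
  shows "r \<in> S \<longleftrightarrow> 1 \<le> r \<and> r \<le> card S"
proof
  assume r: "r \<in> S"
  have "{1..r} \<subseteq> S" using down r by auto
  then have "card {1..r} \<le> card S" using fin by (rule card_mono[rotated])
  then show "1 \<le> r \<and> r \<le> card S" using pos r by simp
next
  assume r: "1 \<le> r \<and> r \<le> card S"
  show "r \<in> S"
  proof (rule ccontr)
    assume "r \<notin> S"
    have "S \<subseteq> {1..r - 1}"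
    proof
      fix s assume s: "s \<in> S"
      have "\<not> r \<le> s" using down[OF s] r \<open>r \<notin> S\<close> by blast
      then show "s \<in> {1..r - 1}" using pos[OF s] by simp
    qed
    then have "card S \<le> r - 1" using card_mono[of "{1..r-1}" S] by simp
    then show False using r by arith
  qed
qed

definition X :: "nat list \<Rightarrow> nat \<Rightarrow> int" where
  "X p i = int (part p i) - int i"

lemma X_strict: "is_partition p \<Longrightarrow> 1 \<le> i \<Longrightarrow> i < i' \<Longrightarrow> X p i' < X p i"
  using part_mono[of p i i'] by (simp add: X_def)

lemma X_key:
  assumes p: "is_partition p" and i: "1 \<le> i"
  shows "c \<le> X p i \<longleftrightarrow> int i \<le> int (count (contents p) c) + max 0 (- c)"
proof -
  define S where "S = {i'. 1 \<le> i' \<and> c \<le> X p i'}"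
  have finS: "finite S"
  proof (rule finite_subset)
    show "S \<subseteq> {1..nat (int (part p 1) - c)}"
    proof
      fix i' assume "i' \<in> S"
      then have "1 \<le> i'" "c \<le> X p i'" by (auto simp: S_def)
      moreover have "part p i' \<le> part p 1" using part_mono[OF p, of 1 i'] \<open>1 \<le> i'\<close> by simp
      ultimately have "int i' \<le> int (part p 1) - c" unfolding X_def by linarith
      then show "i' \<in> {1..nat (int (part p 1) - c)}" using \<open>1 \<le> i'\<close> by simp
    qed
  qed simp
  have S_iff: "r \<in> S \<longleftrightarrow> 1 \<le> r \<and> r \<le> card S" for r
  proof (rule initseg[OF finS])
    show "r \<in> S \<Longrightarrow> 1 \<le> r" for r by (simp add: S_def)
    show "r' \<in> S" if "r \<in> S" "1 \<le> r'" "r' \<le> r" for r r'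
      using that X_strict[OF p, of r' r] by (cases "r' = r") (auto simp: S_def)
  qed
  define T where "T = {i'. 1 \<le> i' \<and> - c < int i' \<and> c \<le> X p i'}"
  have S_split: "S = {1..nat (- c)} \<union> T"
  proof (intro set_eqI iffI)
    fix x assume x: "x \<in> S"
    show "x \<in> {1..nat (- c)} \<union> T"
    proof (cases "int x \<le> - c")
      case True
      then have "x \<le> nat (- c)" by (metis nat_int nat_mono)
      then show ?thesis using x by (simp add: S_def)
    next
      case False then show ?thesis using x by (simp add: S_def T_def)
    qed
  next
    fix x assume x: "x \<in> {1..nat (- c)} \<union> T"
    show "x \<in> S"
    proof (cases "x \<in> T")
      case True then show ?thesis by (simp add: S_def T_def)
    next
      case False
      then have "1 \<le> x" "int x \<le> - c" using x by auto
      then have "c \<le> X p x" unfolding X_def by linarith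
      then show ?thesis using \<open>1 \<le> x\<close> by (simp add: S_def)
    qed
  qed
  have disj: "{1..nat (- c)} \<inter> T = {}" by (auto simp: T_def)
  have finT: "finite T" using finS S_split by simp
  have cardS: "card S = nat (- c) + card T"
    using S_split disj finT by (simp add: card_Un_disjoint)
  have bij: "bij_betw (\<lambda>i. (i, nat (int i + c))) T {b \<in> diagram p. int (snd b) - int (fst b) = c}"
  proof (rule bij_betwI')
    show "\<And>x y. x \<in> T \<Longrightarrow> y \<in> T \<Longrightarrow> ((x, nat (int x + c)) = (y, nat (int y + c))) = (x = y)"
      by auto
    show "(x, nat (int x + c)) \<in> {b \<in> diagram p. int (snd b) - int (fst b) = c}" if "x \<in> T" for x
      using that by (auto simp: T_def X_def diagram_alt)
    show "\<exists>x\<in>T. y = (x, nat (int x + c))" if "y \<in> {b \<in> diagram p. int (snd b) - int (fst b) = c}" for y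
      using that by (auto simp: T_def X_def diagram_alt)
  qed
  have cnt: "count (contents p) c = card T"
    using bij_betw_same_card[OF bij] by (simp add: count_contents)
  have "c \<le> X p i \<longleftrightarrow> i \<in> S" using i by (simp add: S_def)
  also have "\<dots> \<longleftrightarrow> i \<le> card S" using S_iff i by simp
  also have "\<dots> \<longleftrightarrow> int i \<le> int (card S)" by (rule of_nat_le_iff[symmetric])
  also have "int (card S) = int (card T) + int (nat (- c))" using cardS by simp
  also have "int (nat (- c)) = max 0 (- c)" by simp
  finally show ?thesis using cnt by simp
qed

lemma part_eq_imp_eq:
  assumes p: "is_partition p" and q: "is_partition q" and eq: "\<And>i. 1 \<le> i \<Longrightarrow> part p i = part q i"
  shows "p = q"
proof -
  have len: "length p = length q"
  proof (rule ccontr)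
    assume "length p \<noteq> length q"
    then consider "length p < length q" | "length q < length p" by linarith
    then show False
    proof cases
      case 1
      then have "0 < part q (length q)" using part_pos[OF q, of "length q"] by simp
      moreover have "part p (length q) = 0" using 1 by (simp add: part_def)
      ultimately show False using eq[of "length q"] 1 by simp
    next
      case 2
      then have "0 < part p (length p)" using part_pos[OF p, of "length p"] by simp
      moreover have "part q (length p) = 0" using 2 by (simp add: part_def)
      ultimately show False using eq[of "length p"] 2 by simp
    qed
  qed
  show ?thesis
  proof (rule nth_equalityI[OF len])
    fix k assume k: "k < length p"
    have "part p (Suc k) = part q (Suc k)" using eq by simp
    then show "p ! k = q ! k" using k len by (simp add: part_def)
  qed
qed

lemma contents_inj:
  assumes p: "is_partition p" and q: "is_partition q" and c: "contents p = contents q"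
  shows "p = q"
proof (rule part_eq_imp_eq[OF p q])
  fix i :: nat assume i: "1 \<le> i"
  have *: "c \<le> X p i \<longleftrightarrow> c \<le> X q i" for c
    using X_key[OF p i] X_key[OF q i] c by simp
  have "X p i \<le> X q i" using *[of "X p i"] by simp
  moreover have "X q i \<le> X p i" using *[of "X q i"] by simp
  ultimately have "X p i = X q i" by simp
  then show "part p i = part q i" by (simp add: X_def)
qed


lemma conj_iff:
  assumes p: "is_partition p" and r: "1 \<le> r" and i: "1 \<le> i"
  shows "i \<le> part p r \<longleftrightarrow> r \<le> conj_part p i"
proof -
  define S where "S = {r \<in> {1..length p}. i \<le> part p r}"
  have "r \<in> S \<longleftrightarrow> 1 \<le> r \<and> r \<le> card S"
  proof (rule initseg)
    show "finite S" by (simp add: S_def)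
    show "r \<in> S \<Longrightarrow> 1 \<le> r" for r by (simp add: S_def)
    show "r' \<in> S" if "r \<in> S" "1 \<le> r'" "r' \<le> r" for r r'
      using that part_mono[OF p, of r' r] by (auto simp: S_def)
  qed
  moreover have "r \<in> S \<longleftrightarrow> i \<le> part p r"
    using part_gt0_iff[OF p r] i r by (auto simp: S_def)
  ultimately show ?thesis using r by (simp add: conj_part_def S_def)
qed

lemma durfee_iff:
  assumes p: "is_partition p" and i: "1 \<le> i"
  shows "i \<le> part p i \<longleftrightarrow> i \<le> durfee p"
proof -
  define S where "S = {i \<in> {1..length p}. i \<le> part p i}"
  have "i \<in> S \<longleftrightarrow> 1 \<le> i \<and> i \<le> card S"
  proof (rule initseg)
    show "finite S" by (simp add: S_def)
    show "r \<in> S \<Longrightarrow> 1 \<le> r" for r by (simp add: S_def)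
    show "r' \<in> S" if "r \<in> S" "1 \<le> r'" "r' \<le> r" for r r'
      using that part_mono[OF p, of r' r] by (auto simp: S_def)
  qed
  moreover have "i \<in> S \<longleftrightarrow> i \<le> part p i"
    using part_gt0_iff[OF p i] i by (auto simp: S_def)
  ultimately show ?thesis using i by (simp add: durfee_def S_def)
qed

lemma durfee_conj:
  assumes p: "is_partition p" and i: "1 \<le> i" "i \<le> durfee p"
  shows "i \<le> part p i" "i \<le> conj_part p i"
  using durfee_iff[OF p i(1)] conj_iff[OF p i(1) i(1)] i by auto

lemma conj_mono:
  assumes p: "is_partition p" and "1 \<le> i" "i \<le> i'"
  shows "conj_part p i' \<le> conj_part p i"
  unfolding conj_part_def by (rule card_mono) (use assms in auto)

lemma frob_a_strict:
  assumes p: "is_partition p" "1 \<le> i" "i < i'" "i' \<le> durfee p"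
  shows "frob_a p i' < frob_a p i"
  using part_mono[OF p(1), of i i'] durfee_conj[OF p(1), of i'] assms by (simp add: frob_a_def)

lemma frob_b_strict:
  assumes p: "is_partition p" "1 \<le> i" "i < i'" "i' \<le> durfee p"
  shows "frob_b p i' < frob_b p i"
  using conj_mono[OF p(1), of i i'] durfee_conj[OF p(1), of i'] assms by (simp add: frob_b_def)

lemma inj_frob_a: "is_partition p \<Longrightarrow> inj_on (frob_a p) {1..durfee p}"
  unfolding inj_on_def using frob_a_strict[of p] by (metis atLeastAtMost_iff linorder_neqE_nat less_irrefl)

lemma inj_frob_b: "is_partition p \<Longrightarrow> inj_on (frob_b p) {1..durfee p}"
  unfolding inj_on_def using frob_b_strict[of p] by (metis atLeastAtMost_iff linorder_neqE_nat less_irrefl)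

lemma contents_frob:
  assumes p: "is_partition p"
  shows "contents p = (\<Sum>i\<in>{1..durfee p}. mset_set {- int (frob_b p i) .. int (frob_a p i)})"
proof (rule multiset_eqI)
  fix c :: int
  let ?I = "{i \<in> {1..durfee p}. - int (frob_b p i) \<le> c \<and> c \<le> int (frob_a p i)}"
  have rhs: "count (\<Sum>i\<in>{1..durfee p}. mset_set {- int (frob_b p i) .. int (frob_a p i)}) c = card ?I"
  proof -
    have "count (\<Sum>i\<in>{1..durfee p}. mset_set {- int (frob_b p i) .. int (frob_a p i)}) c
       = (\<Sum>i\<in>{1..durfee p}. if - int (frob_b p i) \<le> c \<and> c \<le> int (frob_a p i) then 1 else 0)"
      unfolding count_sum by (rule sum.cong) (auto simp: count_mset_set)
    also have "\<dots> = card ?I" by (simp add: sum.inter_filter[symmetric])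
    finally show ?thesis .
  qed
  have bij: "bij_betw (\<lambda>i. (i + nat (-c), i + nat c)) ?I {b \<in> diagram p. int (snd b) - int (fst b) = c}"
  proof (rule bij_betwI')
    show "\<And>x y. x \<in> ?I \<Longrightarrow> y \<in> ?I \<Longrightarrow> ((x + nat (-c), x + nat c) = (y + nat (-c), y + nat c)) = (x = y)"
      by auto
    show "(x + nat (-c), x + nat c) \<in> {b \<in> diagram p. int (snd b) - int (fst b) = c}" if x: "x \<in> ?I" for x
    proof -
      have x1: "1 \<le> x" "x \<le> durfee p" and cb: "- int (frob_b p x) \<le> c" and ca: "c \<le> int (frob_a p x)"
        using x by auto
      have dx: "x \<le> part p x" "x \<le> conj_part p x" using durfee_conj[OF p x1] by auto
      show ?thesis
      proof (cases "0 \<le> c")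
        case True
        then show ?thesis using ca dx x1 by (auto simp: diagram_alt frob_a_def)
      next
        case False
        have "x + nat (-c) \<le> conj_part p x" using cb dx False by (simp add: frob_b_def)
        then have "x \<le> part p (x + nat (-c))" using conj_iff[OF p, of "x + nat (-c)" x] x1 by simp
        then show ?thesis using False x1 by (auto simp: diagram_alt)
      qed
    qed
    show "\<exists>x\<in>?I. y = (x + nat (-c), x + nat c)"
      if y: "y \<in> {b \<in> diagram p. int (snd b) - int (fst b) = c}" for y
    proof -
      obtain r k where yrk: "y = (r, k)" "1 \<le> r" "1 \<le> k" "k \<le> part p r" "int k - int r = c"
        using y by (cases y) (auto simp: diagram_alt)
      show ?thesis
      proof (cases "0 \<le> c")
        case True
        then have "r \<le> k" using yrk by simp
        then have "r \<le> part p r" using yrk by simp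
        then have "r \<le> durfee p" using durfee_iff[OF p yrk(2)] by simp
        moreover have "c \<le> int (frob_a p r)" using yrk \<open>r \<le> part p r\<close> by (simp add: frob_a_def)
        ultimately show ?thesis using yrk True by (intro bexI[of _ r]) auto
      next
        case False
        then have kr: "k < r" using yrk by simp
        have "part p r \<le> part p k" using part_mono[OF p, of k r] yrk kr by simp
        then have "k \<le> part p k" using yrk by simp
        then have kd: "k \<le> durfee p" using durfee_iff[OF p yrk(3)] by simp
        have "r \<le> conj_part p k" using conj_iff[OF p yrk(2) yrk(3)] yrk by simp
        then have "- int (frob_b p k) \<le> c" using yrk kr by (simp add: frob_b_def)
        then show ?thesis using yrk False kd by (intro bexI[of _ k]) auto
      qed
    qed
  qed
  show "count (contents p) c = count (\<Sum>i\<in>{1..durfee p}. mset_set {- int (frob_b p i) .. int (frob_a p i)}) c"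
    using bij_betw_same_card[OF bij] rhs by (simp add: count_contents)
qed


definition content :: "nat \<times> nat \<Rightarrow> int" where
  "content b = int (snd b) - int (fst b)"

lemma contents_def': "contents p = image_mset content (mset_set (diagram p))"
  unfolding contents_def content_def by (rule image_mset_cong) (simp add: case_prod_beta)

lemma box_adj_content:
  assumes "box_adj y z" shows "content z = content y + 1 \<or> content z = content y - 1"
proof -
  obtain a b where y: "y = (a, b)" by (cases y)
  obtain c d where z: "z = (c, d)" by (cases z)
  have "\<bar>int a - int c\<bar> + \<bar>int b - int d\<bar> = 1" using assms by (simp add: box_adj_def y z)
  then have "(int d - int c) - (int b - int a) = 1 \<or> (int d - int c) - (int b - int a) = -1"
    by (simp add: abs_if split: if_splits; presburger)
  then show ?thesis by (auto simp: content_def y z)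
qed

lemma conv_path:
  assumes "(\<lambda>u v. u \<in> D \<and> v \<in> D \<and> box_adj u v)\<^sup>*\<^sup>* x y" "x \<in> D"
  shows "\<forall>v. min (content x) (content y) \<le> v \<and> v \<le> max (content x) (content y) \<longrightarrow> v \<in> content ` D"
  using assms
proof (induction rule: rtranclp_induct)
  case base
  then show ?case by auto
next
  case (step y z)
  then have zD: "z \<in> D" and adj: "box_adj y z" by auto
  have IH: "\<forall>v. min (content x) (content y) \<le> v \<and> v \<le> max (content x) (content y) \<longrightarrow> v \<in> content ` D"
    using step by auto
  show ?case
  proof (intro allI impI)
    fix v assume v: "min (content x) (content z) \<le> v \<and> v \<le> max (content x) (content z)"
    show "v \<in> content ` D"
    proof (cases "v = content z")
      case True then show ?thesis using zD by auto
    next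
      case False
      then have "min (content x) (content y) \<le> v \<and> v \<le> max (content x) (content y)"
        using v box_adj_content[OF adj] by auto
      then show ?thesis using IH by auto
    qed
  qed
qed

lemma rim_contents:
  assumes rh: "rim_hook l p q" and l: "1 \<le> l"
  shows "\<exists>s. contents p = contents q + mset_set {s..s + int l - 1}"
proof -
  define D where "D = diagram p - diagram q"
  have p: "is_partition p" and q: "is_partition q" and sub: "diagram q \<subseteq> diagram p"
    and cD: "card D = l" and conn: "connected_boxes D"
    and no2: "\<not> (\<exists>i j. {(i, j), (i, Suc j), (Suc i, j), (Suc i, Suc j)} \<subseteq> D)"
    using rh unfolding rim_hook_def D_def by auto
  have finD: "finite D" by (simp add: D_def)
  have split: "diagram p = diagram q \<union> D" using sub by (auto simp: D_def)
  have cp: "contents p = contents q + image_mset content (mset_set D)"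
    unfolding contents_def' split
    by (subst mset_set_Union) (auto simp: D_def)
  have inj: "inj_on content D"
  proof (rule inj_onI)
    fix x y assume x: "x \<in> D" and y: "y \<in> D" and cxy: "content x = content y"
    show "x = y"
    proof (rule ccontr)
      assume ne: "x \<noteq> y"
      have key: False if a: "a \<in> D" and b: "b \<in> D" and ab: "content a = content b" and lt: "fst a < fst b" for a b
      proof -
        obtain i j where aij: "a = (i, j)" by (cases a)
        obtain i' j' where bij: "b = (i', j')" by (cases b)
        have ij: "i < i'" "j < j'" using lt ab by (auto simp: aij bij content_def)
        have ap: "(i, j) \<in> diagram p" "(i, j) \<notin> diagram q" using a by (auto simp: aij D_def)
        have bp: "(i', j') \<in> diagram p" using b by (auto simp: bij D_def)
        have i1: "1 \<le> i" "1 \<le> j" using ap by (auto simp: diagram_alt)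
        have inp: "(u, v) \<in> diagram p" if "i \<le> u" "u \<le> Suc i" "j \<le> v" "v \<le> Suc j" for u v
          using diagram_down[OF p bp, of u v] that ij i1 by auto
        have notq: "(u, v) \<notin> diagram q" if "i \<le> u" "j \<le> v" for u v
          using diagram_down[OF q _ i1(1) that(1) i1(2) that(2)] ap(2) by blast
        have "{(i, j), (i, Suc j), (Suc i, j), (Suc i, Suc j)} \<subseteq> D"
          using inp notq by (auto simp: D_def)
        then show False using no2 by blast
      qed
      have "fst x \<noteq> fst y"
      proof
        assume "fst x = fst y"
        then have "snd x = snd y" using cxy by (simp add: content_def)
        then show False using ne \<open>fst x = fst y\<close> by (simp add: prod_eq_iff)
      qed
      then show False using key[OF x y cxy] key[OF y x cxy[symmetric]] by linarith
    qed
  qed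
  define S where "S = content ` D"
  have finS: "finite S" using finD by (simp add: S_def)
  have cardS: "card S = l" using card_image[OF inj] cD by (simp add: S_def)
  then have neS: "S \<noteq> {}" using l by auto
  have convex: "v \<in> S" if "Min S \<le> v" "v \<le> Max S" for v
  proof -
    obtain x where x: "x \<in> D" "content x = Min S" using Min_in[OF finS neS] by (auto simp: S_def)
    obtain y where y: "y \<in> D" "content y = Max S" using Max_in[OF finS neS] by (auto simp: S_def)
    have "(\<lambda>u v. u \<in> D \<and> v \<in> D \<and> box_adj u v)\<^sup>*\<^sup>* x y"
      using conn x y unfolding connected_boxes_def by blast
    from conv_path[OF this x(1)] show ?thesis using that x y by (auto simp: S_def)
  qed
  have S_eq: "S = {Min S..Max S}"
  proof (intro set_eqI iffI)
    fix v assume "v \<in> S" then show "v \<in> {Min S..Max S}" using finS by simp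
  next
    fix v assume "v \<in> {Min S..Max S}" then show "v \<in> S" using convex by simp
  qed
  then have "card {Min S..Max S} = l" using cardS by simp
  moreover have mm: "Min S \<le> Max S" using Min_le[OF finS Max_in[OF finS neS]] .
  ultimately have "Max S = Min S + int l - 1" by (auto simp: nat_eq_iff)
  then have S_eq2: "S = {Min S..Min S + int l - 1}" using S_eq by simp
  have "image_mset content (mset_set D) = mset_set S"
    using image_mset_mset_set[OF inj] by (simp add: S_def)
  then have "contents p = contents q + mset_set {Min S..Min S + int l - 1}" using cp S_eq2 by simp
  then show ?thesis by blast
qed

definition resc :: "nat \<Rightarrow> nat list \<Rightarrow> int \<Rightarrow> nat" where
  "resc l p r = size (filter_mset (\<lambda>c. c mod int l = r) (contents p))"

lemma interval_res:
  assumes l: "1 \<le> l" and r: "0 \<le> r" "r < int l"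
  shows "card {c \<in> {s..s + int l - 1}. c mod int l = r} = 1"
proof -
  define c0 where "c0 = s + (r - s) mod int l"
  have "{c \<in> {s..s + int l - 1}. c mod int l = r} = {c0}"
  proof (intro set_eqI iffI)
    fix c assume c: "c \<in> {c \<in> {s..s + int l - 1}. c mod int l = r}"
    then have c1: "s \<le> c" "c \<le> s + int l - 1" "c mod int l = r" by auto
    have "(c - s) mod int l = c - s" using c1 by (simp add: mod_pos_pos_trivial)
    moreover have "(c - s) mod int l = (r - s) mod int l"
      using c1(3) r by (metis mod_diff_left_eq mod_pos_pos_trivial)
    ultimately show "c \<in> {c0}" by (simp add: c0_def)
  next
    fix c assume "c \<in> {c0}"
    then have c: "c = c0" by simp
    have b: "0 \<le> (r - s) mod int l" "(r - s) mod int l < int l" using l by auto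
    have "c0 mod int l = (s + (r - s)) mod int l" unfolding c0_def by (simp add: mod_add_right_eq)
    also have "\<dots> = r" using r by simp
    finally show "c \<in> {c \<in> {s..s + int l - 1}. c mod int l = r}" using c b by (simp add: c0_def)
  qed
  then show ?thesis by simp
qed

lemma resc_rim:
  assumes rh: "rim_hook l p q" and l: "1 \<le> l" and r: "0 \<le> r" "r < int l"
  shows "resc l p r = resc l q r + 1"
proof -
  obtain s where s: "contents p = contents q + mset_set {s..s + int l - 1}"
    using rim_contents[OF rh l] by blast
  have "size (filter_mset (\<lambda>c. c mod int l = r) (mset_set {s..s + int l - 1})) = 1"
    using interval_res[OF l r, of s] by (simp add: filter_mset_mset_set)
  then show ?thesis using s by (simp add: resc_def)
qed

lemma resc_balanced:
  assumes "empty_core l p" and l: "1 \<le> l"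
  shows "0 \<le> r \<Longrightarrow> r < int l \<Longrightarrow> 0 \<le> r' \<Longrightarrow> r' < int l \<Longrightarrow> resc l p r = resc l p r'"
  using assms(1)
proof (induction rule: empty_core.induct)
  case empty
  have "diagram [] = {}" by (simp add: diagram_def)
  then show ?case by (simp add: resc_def contents_def)
next
  case (step p q)
  then show ?case using resc_rim[OF step.hyps(1) l] by simp
qed


lemma size_filter_sum:
  "finite I \<Longrightarrow> size (filter_mset P (\<Sum>i\<in>I. M i)) = (\<Sum>i\<in>I. size (filter_mset P (M i)))"
  by (induction I rule: finite_induct) auto

lemma card_filter_insert:
  assumes "finite A" "x \<notin> A"
  shows "card {c\<in>insert x A. P c} = card {c\<in>A. P c} + (if P x then 1 else 0)"
proof (cases "P x")
  case True
  then have "{c\<in>insert x A. P c} = insert x {c\<in>A. P c}" by auto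
  then show ?thesis using assms True by simp
next
  case False
  then have "{c\<in>insert x A. P c} = {c\<in>A. P c}" by auto
  then show ?thesis using False by simp
qed

lemma mod_succ_iff:
  fixes x r l :: int
  assumes "0 \<le> r" "r < l"
  shows "((x + 1) mod l = (r + 1) mod l) \<longleftrightarrow> (x mod l = r)"
proof
  assume "(x + 1) mod l = (r + 1) mod l"
  then have "((x + 1) - 1) mod l = ((r + 1) - 1) mod l"
    by (rule mod_diff_cong) simp
  then show "x mod l = r" using assms by simp
next
  assume "x mod l = r"
  then have "x mod l = r mod l" using assms by simp
  then show "(x + 1) mod l = (r + 1) mod l" by (rule mod_add_cong) simp
qed

lemma interval_shift_count:
  fixes s :: int and l :: nat
  assumes l: "1 \<le> l" and r: "0 \<le> r" "r < int l"
  shows "card {c\<in>{s..s - 1 + int k}. c mod int l = r} + (if (s - 1) mod int l = r then 1 else 0)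
       = card {c\<in>{s..s - 1 + int k}. c mod int l = (r + 1) mod int l} + (if (s - 1 + int k) mod int l = r then 1 else 0)"
proof (induction k)
  case 0
  then show ?case by simp
next
  case (Suc k)
  have ins: "{s..s - 1 + int (Suc k)} = insert (s + int k) {s..s - 1 + int k}" by auto
  have nin: "s + int k \<notin> {s..s - 1 + int k}" by simp
  have e: "((s - 1 + int k + 1) mod int l = (r + 1) mod int l) \<longleftrightarrow> ((s - 1 + int k) mod int l = r)"
    by (rule mod_succ_iff) (use r in auto)
  have e2: "s - 1 + int k + 1 = s + int k" by simp
  have A: "card {c\<in>{s..s - 1 + int (Suc k)}. c mod int l = r}
     = card {c\<in>{s..s - 1 + int k}. c mod int l = r} + (if (s + int k) mod int l = r then 1 else 0)"
    unfolding ins by (rule card_filter_insert) (simp_all add: nin)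
  have B: "card {c\<in>{s..s - 1 + int (Suc k)}. c mod int l = (r + 1) mod int l}
     = card {c\<in>{s..s - 1 + int k}. c mod int l = (r + 1) mod int l} + (if (s + int k) mod int l = (r + 1) mod int l then 1 else 0)"
    unfolding ins by (rule card_filter_insert) (simp_all add: nin)
  have C: "s - 1 + int (Suc k) = s + int k" by simp
  have e': "((s + int k) mod int l = (r + 1) mod int l) = ((s - 1 + int k) mod int l = r)"
    using e e2 by simp
  have aux: "X + q1 = Y + (if b then 1 else 0) \<Longrightarrow> b' = b \<Longrightarrow> (X + t) + q1 = (Y + (if b' then 1 else 0)) + (t::nat)"
    for X Y q1 t b b' by simp
  show ?case unfolding A B unfolding C by (rule aux[OF Suc.IH e'])
qed

lemma interval_shift_count':
  fixes s e :: int and l :: nat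
  assumes l: "1 \<le> l" and r: "0 \<le> r" "r < int l" and se: "s \<le> e + 1"
  shows "card {c\<in>{s..e}. c mod int l = r} + (if (s - 1) mod int l = r then 1 else 0)
       = card {c\<in>{s..e}. c mod int l = (r + 1) mod int l} + (if e mod int l = r then 1 else 0)"
  using interval_shift_count[OF l r, of s "nat (e - s + 1)"] se by simp

context
  fixes l :: nat and \<mu> :: "nat list"
  assumes l: "1 \<le> l" and mu: "is_partition \<mu>" and ec: "empty_core l \<mu>"
begin

lemma resc_frob:
  "resc l \<mu> r = (\<Sum>i\<in>{1..durfee \<mu>}. card {c\<in>{- int (frob_b \<mu> i)..int (frob_a \<mu> i)}. c mod int l = r})"
  unfolding resc_def contents_frob[OF mu] by (simp add: size_filter_sum filter_mset_mset_set)

lemma count_res_eq: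
  assumes r: "0 \<le> r" "r < int l"
  shows "card {i\<in>{1..durfee \<mu>}. (- int (frob_b \<mu> i) - 1) mod int l = r}
       = card {i\<in>{1..durfee \<mu>}. int (frob_a \<mu> i) mod int l = r}"
proof -
  let ?I = "{1..durfee \<mu>}"
  let ?g = "\<lambda>i r. card {c\<in>{- int (frob_b \<mu> i)..int (frob_a \<mu> i)}. c mod int l = r}"
  have r1: "0 \<le> (r + 1) mod int l" "(r + 1) mod int l < int l" using l by auto
  have bal: "resc l \<mu> r = resc l \<mu> ((r + 1) mod int l)"
    using resc_balanced[OF ec l r r1] .
  have each: "?g i r + (if (- int (frob_b \<mu> i) - 1) mod int l = r then 1 else 0)
      = ?g i ((r + 1) mod int l) + (if int (frob_a \<mu> i) mod int l = r then 1 else 0)" for i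
    by (rule interval_shift_count'[OF l r]) simp
  have "(\<Sum>i\<in>?I. ?g i r) + (\<Sum>i\<in>?I. (if (- int (frob_b \<mu> i) - 1) mod int l = r then 1 else 0))
      = (\<Sum>i\<in>?I. ?g i ((r + 1) mod int l)) + (\<Sum>i\<in>?I. (if int (frob_a \<mu> i) mod int l = r then 1 else 0))"
    using each by (simp add: sum.distrib[symmetric])
  then have "(\<Sum>i\<in>?I. (if (- int (frob_b \<mu> i) - 1) mod int l = r then 1 else 0::nat))
      = (\<Sum>i\<in>?I. (if int (frob_a \<mu> i) mod int l = r then 1 else 0))"
    using bal unfolding resc_frob by simp
  then show ?thesis by (simp add: sum.inter_filter[symmetric])
qed

lemma typeA_iff:
  assumes j: "j < l"
  shows "typeA l \<mu> i = j \<longleftrightarrow> int (frob_a \<mu> i) mod int l = (- int j - 1) mod int l"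
proof -
  have nn: "0 \<le> (- (int (frob_a \<mu> i) + 1)) mod int l" using l by simp
  have "typeA l \<mu> i = j \<longleftrightarrow> (- (int (frob_a \<mu> i) + 1)) mod int l = int j"
    unfolding typeA_def using nn by (auto simp: nat_eq_iff)
  also have "\<dots> \<longleftrightarrow> (- (int (frob_a \<mu> i) + 1)) mod int l = int j mod int l" using j by simp
  also have "\<dots> \<longleftrightarrow> int l dvd (- (int (frob_a \<mu> i) + 1) - int j)" by (rule mod_eq_dvd_iff)
  also have "\<dots> \<longleftrightarrow> int l dvd (int (frob_a \<mu> i) - (- int j - 1))"
  proof -
    have "int (frob_a \<mu> i) - (- int j - 1) = - (- (int (frob_a \<mu> i) + 1) - int j)" by simp
    then show ?thesis by (simp only: dvd_minus_iff)
  qed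
  also have "\<dots> \<longleftrightarrow> int (frob_a \<mu> i) mod int l = (- int j - 1) mod int l" by (rule mod_eq_dvd_iff[symmetric])
  finally show ?thesis .
qed

lemma typeL_iff:
  assumes j: "j < l"
  shows "typeL l \<mu> i = j \<longleftrightarrow> (- int (frob_b \<mu> i) - 1) mod int l = (- int j - 1) mod int l"
proof -
  have "typeL l \<mu> i = j \<longleftrightarrow> int (frob_b \<mu> i) mod int l = int j mod int l"
  proof -
    have "typeL l \<mu> i = j \<longleftrightarrow> int (frob_b \<mu> i mod l) = int j" unfolding typeL_def by simp
    also have "int (frob_b \<mu> i mod l) = int (frob_b \<mu> i) mod int l" by (simp add: of_nat_mod)
    also have "int j = int j mod int l" using j by simp
    finally show ?thesis .
  qed
  also have "\<dots> \<longleftrightarrow> int l dvd (int (frob_b \<mu> i) - int j)" by (rule mod_eq_dvd_iff)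
  also have "\<dots> \<longleftrightarrow> int l dvd ((- int (frob_b \<mu> i) - 1) - (- int j - 1))"
  proof -
    have "(- int (frob_b \<mu> i) - 1) - (- int j - 1) = - (int (frob_b \<mu> i) - int j)" by simp
    then show ?thesis by (simp only: dvd_minus_iff)
  qed
  also have "\<dots> \<longleftrightarrow> (- int (frob_b \<mu> i) - 1) mod int l = (- int j - 1) mod int l" by (rule mod_eq_dvd_iff[symmetric])
  finally show ?thesis .
qed

lemma type_count_eq:
  assumes j: "j < l"
  shows "card {i\<in>{1..durfee \<mu>}. typeA l \<mu> i = j} = card {i\<in>{1..durfee \<mu>}. typeL l \<mu> i = j}"
proof -
  define r where "r = (- int j - 1) mod int l"
  have r: "0 \<le> r" "r < int l" using l by (auto simp: r_def)
  have "{i\<in>{1..durfee \<mu>}. typeA l \<mu> i = j} = {i\<in>{1..durfee \<mu>}. int (frob_a \<mu> i) mod int l = r}"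
    using typeA_iff[OF j] by (auto simp: r_def)
  moreover have "{i\<in>{1..durfee \<mu>}. typeL l \<mu> i = j} = {i\<in>{1..durfee \<mu>}. (- int (frob_b \<mu> i) - 1) mod int l = r}"
    using typeL_iff[OF j] by (auto simp: r_def)
  ultimately show ?thesis using count_res_eq[OF r] by simp
qed

end


lemma sorted_rep: "sorted_wrt (\<lambda>x y. y \<le> x) (replicate n (x::nat))"
  by (induction n) auto

lemma diagram_Nil[simp]: "diagram [] = {}" by (simp add: diagram_def)

definition addhook :: "nat \<Rightarrow> nat \<Rightarrow> nat list \<Rightarrow> nat list" where
  "addhook a b p = Suc a # map Suc (p @ replicate (b - length p) 0)"

lemma addhook_partition:
  assumes p: "is_partition p" and lb: "length p \<le> b" and pa: "\<forall>x\<in>set p. x \<le> a"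
  shows "is_partition (addhook a b p)"
proof -
  have s: "sorted_wrt (\<ge>) p" and z: "0 \<notin> set p" using p by (auto simp: is_partition_def)
  have s2: "sorted_wrt (\<ge>) (p @ replicate (b - length p) 0)"
    using s by (auto simp: sorted_wrt_append sorted_rep)
  have s3: "sorted_wrt (\<ge>) (map Suc (p @ replicate (b - length p) 0))"
    unfolding sorted_wrt_map using s2 by simp
  show ?thesis unfolding is_partition_def addhook_def using s3 pa by auto
qed

lemma addhook_length: "length p \<le> b \<Longrightarrow> length (addhook a b p) = Suc b"
  by (simp add: addhook_def)

lemma addhook_bound: "\<forall>x\<in>set p. x \<le> a \<Longrightarrow> \<forall>x\<in>set (addhook a b p). x \<le> Suc a"
  by (auto simp: addhook_def)

lemma part_addhook1: "part (addhook a b p) 1 = Suc a" "part (addhook a b p) (Suc 0) = Suc a"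
  by (simp_all add: part_def addhook_def)

lemma part_addhook2:
  assumes lb: "length p \<le> b" and r: "1 \<le> r"
  shows "part (addhook a b p) (Suc r) = (if r \<le> b then Suc (part p r) else 0)"
proof (cases "r \<le> b")
  case True
  have len: "r - 1 < length (p @ replicate (b - length p) 0)" using True r lb by simp
  have "addhook a b p ! r = map Suc (p @ replicate (b - length p) 0) ! (r - 1)"
    using r by (simp add: addhook_def nth_Cons' del: map_append)
  also have "\<dots> = Suc ((p @ replicate (b - length p) 0) ! (r - 1))" by (rule nth_map[OF len])
  also have "(p @ replicate (b - length p) 0) ! (r - 1) = part p r"
    using True r lb by (auto simp: nth_append part_def)
  finally show ?thesis using True lb r by (simp add: part_def addhook_def)
next
  case False
  then show ?thesis using lb by (simp add: part_def addhook_def)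
qed

lemma diagram_addhook:
  assumes lb: "length p \<le> b"
  shows "diagram (addhook a b p) = ({1} \<times> {1..Suc a}) \<union> ({2..Suc b} \<times> {1}) \<union> (\<lambda>(i, j). (Suc i, Suc j)) ` diagram p"
proof (intro set_eqI iffI)
  fix x assume x: "x \<in> diagram (addhook a b p)"
  obtain i j where ij: "x = (i, j)" by (cases x)
  have i1: "1 \<le> i" "1 \<le> j" "j \<le> part (addhook a b p) i" using x by (auto simp: ij diagram_alt)
  show "x \<in> ({1} \<times> {1..Suc a}) \<union> ({2..Suc b} \<times> {1}) \<union> (\<lambda>(i, j). (Suc i, Suc j)) ` diagram p"
  proof (cases "i = 1")
    case True then show ?thesis using i1 by (simp add: ij part_addhook1)
  next
    case False
    then obtain r where r: "i = Suc r" "1 \<le> r" using i1 by (metis One_nat_def Suc_le_eq lessI not0_implies_Suc not_less_eq_eq le_antisym)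
    have jr: "j \<le> (if r \<le> b then Suc (part p r) else 0)" using i1 r part_addhook2[OF lb r(2), of a] by simp
    then have rb: "r \<le> b" using i1 by (simp split: if_splits)
    show ?thesis
    proof (cases "j = 1")
      case True then show ?thesis using r rb by (auto simp: ij)
    next
      case False
      then obtain c where c: "j = Suc c" "1 \<le> c" using i1 by (metis One_nat_def Suc_le_eq lessI not0_implies_Suc not_less_eq_eq le_antisym)
      have "(r, c) \<in> diagram p" using jr rb c r by (auto simp: diagram_alt)
      then show ?thesis by (auto simp: ij r c image_iff intro!: bexI[of _ "(r, c)"])
    qed
  qed
next
  fix x assume x: "x \<in> ({1} \<times> {1..Suc a}) \<union> ({2..Suc b} \<times> {1}) \<union> (\<lambda>(i, j). (Suc i, Suc j)) ` diagram p"
  show "x \<in> diagram (addhook a b p)"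
  proof -
    { assume "x \<in> {1} \<times> {1..Suc a}"
      then have ?thesis by (auto simp: diagram_alt part_addhook1) }
    moreover
    { assume "x \<in> {2..Suc b} \<times> {1}"
      then obtain i where i: "x = (i, 1)" "2 \<le> i" "i \<le> Suc b" by auto
      define r where "r = i - 1"
      have r: "x = (Suc r, 1)" "1 \<le> r" "r \<le> b" using i by (auto simp: r_def)
      then have ?thesis using part_addhook2[OF lb r(2), of a] by (simp add: diagram_alt) }
    moreover
    { assume "x \<in> (\<lambda>(i, j). (Suc i, Suc j)) ` diagram p"
      then obtain r c where r: "x = (Suc r, Suc c)" "(r, c) \<in> diagram p" by auto
      then have r1: "1 \<le> r" "r \<le> length p" "1 \<le> c" "c \<le> part p r" by (auto simp: diagram_def)
      then have ?thesis using part_addhook2[OF lb r1(1), of a] r lb by (simp add: diagram_alt) }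
    ultimately show ?thesis using x by blast
  qed
qed

lemma contents_addhook:
  assumes lb: "length p \<le> b"
  shows "contents (addhook a b p) = contents p + mset_set {0..int a} + mset_set {- int b..-1}"
proof -
  define R where "R = {1::nat} \<times> {1..Suc a}"
  define C where "C = {2..Suc b} \<times> {1::nat}"
  define sh where "sh = (\<lambda>(i::nat, j::nat). (Suc i, Suc j))"
  have d: "diagram (addhook a b p) = R \<union> C \<union> sh ` diagram p"
    using diagram_addhook[OF lb] by (simp add: R_def C_def sh_def)
  have injsh: "inj_on sh (diagram p)" by (auto simp: sh_def inj_on_def)
  have fin: "finite R" "finite C" "finite (sh ` diagram p)" by (auto simp: R_def C_def)
  have disj1: "R \<inter> C = {}" by (auto simp: R_def C_def)
  have disj2: "(R \<union> C) \<inter> sh ` diagram p = {}" by (auto simp: R_def C_def sh_def diagram_def)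
  have m: "mset_set (R \<union> C \<union> sh ` diagram p) = mset_set R + mset_set C + image_mset sh (mset_set (diagram p))"
    using fin disj1 disj2 by (simp add: mset_set_Union image_mset_mset_set[OF injsh])
  have cs: "image_mset content (image_mset sh (mset_set (diagram p))) = contents p"
    unfolding contents_def' image_mset.compositionality
    by (rule image_mset_cong) (simp add: sh_def content_def case_prod_beta)
  have cR: "image_mset content (mset_set R) = mset_set {0..int a}"
  proof -
    have "inj_on content R" by (auto simp: inj_on_def R_def content_def)
    moreover have "content ` R = {0..int a}"
    proof (intro set_eqI iffI)
      fix v assume "v \<in> content ` R" then show "v \<in> {0..int a}" by (auto simp: R_def content_def)
    next
      fix v assume v: "v \<in> {0..int a}"
      have "(1, nat v + 1) \<in> R" using v by (auto simp: R_def)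
      moreover have "content (1, nat v + 1) = v" using v by (simp add: content_def)
      ultimately show "v \<in> content ` R" by (metis image_eqI)
    qed
    ultimately show ?thesis by (simp add: image_mset_mset_set)
  qed
  have cC: "image_mset content (mset_set C) = mset_set {- int b..-1}"
  proof -
    have "inj_on content C" by (auto simp: inj_on_def C_def content_def)
    moreover have "content ` C = {- int b..-1}"
    proof (intro set_eqI iffI)
      fix v assume "v \<in> content ` C" then show "v \<in> {- int b..-1}" by (auto simp: C_def content_def)
    next
      fix v assume v: "v \<in> {- int b..-1}"
      have "(nat (- v) + 1, 1) \<in> C" using v by (auto simp: C_def)
      moreover have "content (nat (- v) + 1, 1) = v" using v by (simp add: content_def)
      ultimately show "v \<in> content ` C" by (metis image_eqI)
    qed
    ultimately show ?thesis by (simp add: image_mset_mset_set)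
  qed
  show ?thesis unfolding contents_def' d m image_mset_union
    using cs cR cC by (simp add: contents_def' add.commute add.left_commute)
qed

lemma frob_exists_aux:
  "finite SA \<Longrightarrow> finite SB \<Longrightarrow> card SA = n \<Longrightarrow> card SB = n \<Longrightarrow>
   \<exists>p. is_partition p \<and>
       contents p = (\<Sum>\<alpha>\<in>SA. mset_set {0..int \<alpha>}) + (\<Sum>\<beta>\<in>SB. mset_set {- int \<beta>..-1}) \<and>
       (SA \<noteq> {} \<longrightarrow> length p = Max SB + 1 \<and> (\<forall>x\<in>set p. x \<le> Max SA + 1)) \<and>
       (SA = {} \<longrightarrow> p = [])"
proof (induction n arbitrary: SA SB)
  case 0
  then have "SA = {}" "SB = {}" by auto
  moreover have "is_partition []" by (simp add: is_partition_def)
  moreover have "contents [] = {#}" by (simp only: contents_def' diagram_Nil) simp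
  ultimately show ?case by auto
next
  case (Suc n)
  have neA: "SA \<noteq> {}" and neB: "SB \<noteq> {}" using Suc.prems by auto
  define a where "a = Max SA"
  define b where "b = Max SB"
  have aA: "a \<in> SA" and bB: "b \<in> SB" using Suc.prems neA neB by (auto simp: a_def b_def)
  define SA' where "SA' = SA - {a}"
  define SB' where "SB' = SB - {b}"
  have cA: "card SA' = n" and cB: "card SB' = n" using Suc.prems aA bB by (auto simp: SA'_def SB'_def)
  obtain p where p: "is_partition p"
    and cp: "contents p = (\<Sum>\<alpha>\<in>SA'. mset_set {0..int \<alpha>}) + (\<Sum>\<beta>\<in>SB'. mset_set {- int \<beta>..-1})"
    and bd: "SA' \<noteq> {} \<longrightarrow> length p = Max SB' + 1 \<and> (\<forall>x\<in>set p. x \<le> Max SA' + 1)"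
    and emp: "SA' = {} \<longrightarrow> p = []"
    using Suc.IH[OF _ _ cA cB] Suc.prems by (auto simp: SA'_def SB'_def)
  have lb: "length p \<le> b" and pa: "\<forall>x\<in>set p. x \<le> a"
  proof -
    show "length p \<le> b"
    proof (cases "SA' = {}")
      case True then show ?thesis using emp by simp
    next
      case False
      have "finite SA'" using Suc.prems by (simp add: SA'_def)
      then have "n \<noteq> 0" using False cA by auto
      then have "SB' \<noteq> {}" using cB by auto
      moreover have "finite SB'" using Suc.prems by (simp add: SB'_def)
      ultimately have "Max SB' \<in> SB'" using Max_in by blast
      then have "Max SB' < b" using Suc.prems by (auto simp: SB'_def b_def less_le)
      then show ?thesis using bd False by simp
    qed
    show "\<forall>x\<in>set p. x \<le> a"
    proof (cases "SA' = {}")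
      case True then show ?thesis using emp by simp
    next
      case False
      moreover have "finite SA'" using Suc.prems by (simp add: SA'_def)
      ultimately have "Max SA' \<in> SA'" using Max_in by blast
      then have "Max SA' < a" using Suc.prems by (auto simp: SA'_def a_def less_le)
      then show ?thesis using bd False by auto
    qed
  qed
  define p' where "p' = addhook a b p"
  have "is_partition p'" using addhook_partition[OF p lb pa] by (simp add: p'_def)
  moreover have "contents p' = (\<Sum>\<alpha>\<in>SA. mset_set {0..int \<alpha>}) + (\<Sum>\<beta>\<in>SB. mset_set {- int \<beta>..-1})"
  proof -
    have sA: "(\<Sum>\<alpha>\<in>SA. mset_set {0..int \<alpha>}) = mset_set {0..int a} + (\<Sum>\<alpha>\<in>SA'. mset_set {0..int \<alpha>})"
      using Suc.prems aA unfolding SA'_def by (simp add: sum.remove)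
    have sB: "(\<Sum>\<beta>\<in>SB. mset_set {- int \<beta>..-1}) = mset_set {- int b..-1} + (\<Sum>\<beta>\<in>SB'. mset_set {- int \<beta>..-1})"
      using Suc.prems bB unfolding SB'_def by (simp add: sum.remove)
    show ?thesis unfolding p'_def contents_addhook[OF lb] cp sA sB
      by (simp add: add.commute add.left_commute)
  qed
  moreover have "length p' = Max SB + 1" using addhook_length[OF lb] by (simp add: p'_def b_def)
  moreover have "\<forall>x\<in>set p'. x \<le> Max SA + 1" using addhook_bound[OF pa] by (simp add: p'_def a_def)
  ultimately show ?case using neA by blast
qed

lemma frob_exists:
  assumes "finite SA" "finite SB" "card SA = card SB"
  shows "\<exists>p. is_partition p \<and>
       contents p = (\<Sum>\<alpha>\<in>SA. mset_set {0..int \<alpha>}) + (\<Sum>\<beta>\<in>SB. mset_set {- int \<beta>..-1})"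
  using frob_exists_aux[OF assms(1,2) refl assms(3)[symmetric]] by blast


context
  fixes l :: nat and h :: rat and H :: "nat \<Rightarrow> rat"
  assumes l: "1 \<le> l"
begin

abbreviation th where "th \<equiv> theta l h H"

definition IS :: "int \<Rightarrow> int \<Rightarrow> rat" where
  "IS a b = (\<Sum>t\<in>{a..b}. th t)"

lemma theta_period: "th (k + int l * q) = th k"
  by (simp add: theta_def)

lemma IS_split:
  assumes "a \<le> b + 1" "b \<le> c"
  shows "IS a c = IS a b + IS (b + 1) c"
proof -
  have "{a..c} = {a..b} \<union> {b+1..c}" using assms by auto
  moreover have "{a..b} \<inter> {b+1..c} = {}" by auto
  ultimately show ?thesis unfolding IS_def by (simp add: sum.union_disjoint)
qed

lemma IS_empty: "b < a \<Longrightarrow> IS a b = 0"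
  by (simp add: IS_def)

lemma IS_shift: "IS (a + int l * q) (b + int l * q) = IS a b"
  unfolding IS_def
proof (rule sum.reindex_bij_witness[where i="\<lambda>t. t + int l * q" and j="\<lambda>t. t - int l * q"])
  fix t assume "t \<in> {a + int l * q..b + int l * q}"
  show "th (t - int l * q) = th t"
    using theta_period[of "t - int l * q" q] by simp
qed auto

lemma IS_1_n:
  assumes "n < l"
  shows "IS 1 (int n) = ee H n"
proof -
  have "IS 1 (int n) = (\<Sum>s\<in>{1..n}. th (int s))"
    unfolding IS_def
    by (rule sum.reindex_bij_witness[where i="\<lambda>s. int s" and j="\<lambda>t. nat t"]) auto
  also have "\<dots> = (\<Sum>s\<in>{1..n}. H s)"
  proof (rule sum.cong)
    fix s assume s: "s \<in> {1..n}"
    then have "int s mod int l = int s" using assms by simp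
    then show "th (int s) = H s" using s by (simp add: theta_def)
  qed simp
  finally show ?thesis by (simp add: ee_def)
qed

lemma IS_1_l: "IS 1 (int l) = - h"
proof -
  have "IS 1 (int l) = IS 1 (int (l - 1)) + IS (int (l - 1) + 1) (int l)"
    using l by (intro IS_split) auto
  also have "IS (int (l - 1) + 1) (int l) = th (int l)"
    using l by (simp add: IS_def of_nat_diff)
  also have "th (int l) = - h + H0 l H" by (simp add: theta_def)
  also have "IS 1 (int (l - 1)) = ee H (l - 1)" using l by (intro IS_1_n) auto
  finally show ?thesis by (simp add: H0_def ee_def)
qed

lemma IS_full: "IS (x + 1) (x + int l) = - h"
proof -
  define x' where "x' = x mod int l"
  have x: "x = x' + int l * (x div int l)" by (simp add: x'_def)
  have x'r: "0 \<le> x'" "x' < int l" using l by (auto simp: x'_def)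
  have e1: "x + 1 = (x' + 1) + int l * (x div int l)" and e2: "x + int l = (x' + int l) + int l * (x div int l)"
    using x by linarith+
  have "IS (x + 1) (x + int l) = IS (x' + 1) (x' + int l)"
    unfolding e1 e2 by (rule IS_shift)
  also have "\<dots> = IS (x' + 1) (int l) + IS (int l + 1) (x' + int l)"
    using x'r by (intro IS_split) auto
  also have "IS (int l + 1) (x' + int l) = IS 1 x'"
    using IS_shift[of 1 1 x'] by (simp add: add.commute)
  also have "IS (x' + 1) (int l) + IS 1 x' = IS 1 (int l)"
    using IS_split[of 1 x' "int l"] x'r by simp
  finally show ?thesis using IS_1_l by simp
qed

lemma IS_peel:
  assumes "0 \<le> y"
  shows "IS (x + 1) (x + y + int l * int q) = IS (x + 1) (x + y) - of_nat q * h"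
proof (induction q)
  case 0 then show ?case by simp
next
  case (Suc q)
  have "IS (x + 1) (x + y + int l * int (Suc q))
      = IS (x + 1) (x + y + int l * int q) + IS (x + y + int l * int q + 1) (x + y + int l * int (Suc q))"
    using assms l by (intro IS_split) (auto simp: algebra_simps)
  also have "IS (x + y + int l * int q + 1) (x + y + int l * int (Suc q)) = - h"
    using IS_full[of "x + y + int l * int q"] by (simp add: algebra_simps)
  finally show ?case using Suc.IH by (simp add: algebra_simps)
qed

lemma sum_reidx1: "(\<Sum>s\<in>{1..j}. th (r - s)) = IS (r - j) (r - 1)"
  unfolding IS_def
  by (rule sum.reindex_bij_witness[where i="\<lambda>t. r - t" and j="\<lambda>s. r - s"]) auto

lemma sum_reidx2: "(\<Sum>s\<in>{0..n}. th (c + s)) = IS c (c + n)"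
  unfolding IS_def
  by (rule sum.reindex_bij_witness[where i="\<lambda>t. t - c" and j="\<lambda>s. c + s"]) auto

lemma alpha_leg:
  assumes "1 \<le> j" "j \<le> int b"
  shows "alpha l h H (int b + 1) (int a + int b + 1) j = IS (int b + 1 - j) (int b)"
  using assms by (simp add: alpha_def sum_reidx1)

lemma alpha_arm:
  assumes "int b + 1 \<le> j" "j \<le> int a + int b + 1"
  shows "alpha l h H (int b + 1) (int a + int b + 1) j = - IS (- int a) (int b - j)"
proof (cases "j = int a + int b + 1")
  case True
  then show ?thesis by (simp add: alpha_def IS_empty)
next
  case False
  have "alpha l h H (int b + 1) (int a + int b + 1) j
      = - (\<Sum>s\<in>{0..int a + int b + 1 - j - 1}. th (- (int a + int b + 1) + (int b + 1) + s))"
    using assms False by (simp add: alpha_def)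
  also have "\<dots> = - IS (- int a) (int b - j)"
    using sum_reidx2[where n="int a + int b + 1 - j - 1" and c="- int a"] by (simp add: algebra_simps)
  finally show ?thesis .
qed

end

context
  fixes l :: nat and h :: rat and H :: "nat \<Rightarrow> rat"
  assumes l: "1 \<le> l"
begin

lemma alpha_leg_val:
  assumes b: "1 \<le> b" and t: "t \<le> (b - 1) div l"
  shows "alpha l h H (int b + 1) (int a + int b + 1) (int b - int l * int t)
       = ee' h H (b mod l) - of_nat ((b - 1) div l - t) * h"
proof -
  define D where "D = (b - 1) div l"
  define \<beta> where "\<beta> = (b - 1) mod l + 1"
  have bD: "b = l * D + \<beta>" using b by (simp add: D_def \<beta>_def)
  have tl: "int l * int t \<le> int l * int D" using t l by (simp add: D_def)
  have b1: "1 \<le> \<beta>" by (simp add: \<beta>_def)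
  have bD': "int b = int l * int D + int \<beta>" using bD by simp
  have j1: "1 \<le> int b - int l * int t" using tl bD' b1 by linarith
  have "alpha l h H (int b + 1) (int a + int b + 1) (int b - int l * int t)
      = IS l h H (int b + 1 - (int b - int l * int t)) (int b)"
    using j1 by (intro alpha_leg[OF l]) auto
  also have "int b + 1 - (int b - int l * int t) = int l * int t + 1" by simp
  also have "IS l h H (int l * int t + 1) (int b) = IS l h H 1 (int \<beta>) - of_nat (D - t) * h"
  proof -
    have eb: "int b = int l * int t + int \<beta> + int l * int (D - t)"
      using bD t by (simp add: D_def algebra_simps of_nat_diff flip: of_nat_mult)
    have "IS l h H (int l * int t + 1) (int l * int t + int \<beta> + int l * int (D - t))
      = IS l h H (int l * int t + 1) (int l * int t + int \<beta>) - of_nat (D - t) * h"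
      by (rule IS_peel[OF l]) simp
    also have "IS l h H (int l * int t + 1) (int l * int t + int \<beta>) = IS l h H 1 (int \<beta>)"
      using IS_shift[OF l, where a=1 and q="int t" and b="int \<beta>"] by (simp add: add.commute)
    finally show ?thesis unfolding eb[symmetric] .
  qed
  also have "IS l h H 1 (int \<beta>) = ee' h H (b mod l)"
  proof -
    have bm: "b mod l = (if \<beta> = l then 0 else \<beta>)"
      using b l mod_Suc[of "b - 1" l] by (simp add: \<beta>_def)
    show ?thesis
    proof (cases "\<beta> = l")
      case True then show ?thesis using bm IS_1_l[OF l] by (simp add: ee'_def)
    next
      case False
      have "(b - 1) mod l < l" using l by simp
      then have "\<beta> < l" using False by (simp add: \<beta>_def)
      then have "IS l h H 1 (int \<beta>) = ee H \<beta>" by (rule IS_1_n[OF l])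
      moreover have "b mod l = \<beta>" "\<beta> \<noteq> 0" using bm False by (auto simp: \<beta>_def)
      ultimately show ?thesis by (simp add: ee'_def)
    qed
  qed
  finally show ?thesis by (simp add: D_def)
qed

lemma alpha_arm_val:
  assumes t: "1 \<le> t" "t \<le> (a + 1) div l"
  shows "alpha l h H (int b + 1) (int a + int b + 1) (int b + int l * int t)
       = ee'' l h H (a mod l) + of_nat ((a + 1) div l - t) * h"
proof -
  define A where "A = (a + 1) div l"
  define \<rho> where "\<rho> = (a + 1) mod l"
  have aA: "a + 1 = l * A + \<rho>" by (simp add: A_def \<rho>_def)
  have \<rho>l: "\<rho> < l" using l by (simp add: \<rho>_def)
  have tA: "t \<le> A" using t by (simp add: A_def)
  have "l * t \<le> l * A" using tA by simp
  then have ltA: "l * t \<le> a + 1" using aA by linarith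
  have "alpha l h H (int b + 1) (int a + int b + 1) (int b + int l * int t)
      = - IS l h H (- int a) (int b - (int b + int l * int t))"
    using ltA l t by (intro alpha_arm[OF l]) (auto simp flip: of_nat_mult)
  also have "int b - (int b + int l * int t) = (- int a - 1) + int \<rho> + int l * int (A - t)"
    using aA tA by (simp add: algebra_simps of_nat_diff flip: of_nat_mult of_nat_add; simp add: algebra_simps)
  also have "IS l h H (- int a) ((- int a - 1) + int \<rho> + int l * int (A - t))
      = IS l h H (- int a) ((- int a - 1) + int \<rho>) - of_nat (A - t) * h"
    using IS_peel[OF l, where y="int \<rho>" and x="- int a - 1" and q="A - t"] by simp
  also have "IS l h H (- int a) ((- int a - 1) + int \<rho>) = IS l h H (int l - int \<rho> + 1) (int l)"
  proof -
    have e1: "- int a = (int l - int \<rho> + 1) + int l * (- int A - 1)"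
      using aA by (simp add: algebra_simps flip: of_nat_mult of_nat_add; simp add: algebra_simps)
    have e2: "(- int a - 1) + int \<rho> = int l + int l * (- int A - 1)"
      using aA by (simp add: algebra_simps flip: of_nat_mult of_nat_add; simp add: algebra_simps)
    show ?thesis by (rule trans[OF arg_cong2[where f="IS l h H", OF e1 e2] IS_shift[OF l]])
  qed
  also have "IS l h H (int l - int \<rho> + 1) (int l) = (if \<rho> = 0 then 0 else - h - ee H (l - \<rho>))"
  proof (cases "\<rho> = 0")
    case True then show ?thesis by (simp add: IS_empty[OF l])
  next
    case False
    have "IS l h H 1 (int l) = IS l h H 1 (int (l - \<rho>)) + IS l h H (int (l - \<rho>) + 1) (int l)"
      using \<rho>l by (intro IS_split) auto
    moreover have "IS l h H 1 (int (l - \<rho>)) = ee H (l - \<rho>)" using False \<rho>l by (intro IS_1_n[OF l]) auto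
    moreover have e: "int (l - \<rho>) + 1 = int l - int \<rho> + 1" using \<rho>l by simp
    moreover have "IS l h H 1 (int l) = - h" by (rule IS_1_l[OF l])
    ultimately have "- h = ee H (l - \<rho>) + IS l h H (int l - int \<rho> + 1) (int l)" by simp
    then show ?thesis using False by simp
  qed
  also have "- ((if \<rho> = 0 then 0 else - h - ee H (l - \<rho>)) - of_nat (A - t) * h)
      = ee'' l h H (a mod l) + of_nat (A - t) * h"
  proof -
    have am: "\<rho> = (if Suc (a mod l) = l then 0 else Suc (a mod l))"
      using mod_Suc[of a l] by (simp add: \<rho>_def)
    show ?thesis
    proof (cases "\<rho> = 0")
      case True
      then have "a mod l = l - 1" using am l by (auto split: if_splits)
      then show ?thesis using True by (simp add: ee''_def)
    next
      case False
      then have r: "\<rho> = Suc (a mod l)" "a mod l \<noteq> l - 1" using am l by (auto split: if_splits)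
      then have "l - \<rho> = l - a mod l - 1" by simp
      then show ?thesis using False r by (simp add: ee''_def ee_def)
    qed
  qed
  finally show ?thesis by (simp add: A_def)
qed

end

lemma mod_sub_mult: "(x - int l * t) mod int l = (x::int) mod int l"
proof -
  have "x - int l * t = x + int l * (- t)" by simp
  then show ?thesis by (simp only: mod_mult_self2)
qed

lemma ceil_nat:
  assumes l: "1 \<le> l"
  shows "nat \<lceil>(of_nat b :: rat) / of_nat l\<rceil> = (if b = 0 then 0 else (b - 1) div l + 1)"
proof (cases "b = 0")
  case True then show ?thesis by simp
next
  case False
  define D where "D = (b - 1) div l"
  have lp: "(0::rat) < of_nat l" using l by simp
  have d1: "D * l \<le> b - 1" by (simp add: D_def div_times_less_eq_dividend)
  have d2: "b - 1 < D * l + l"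
  proof -
    have "b - 1 = D * l + (b - 1) mod l" by (simp add: D_def)
    moreover have "(b - 1) mod l < l" using l by simp
    ultimately show ?thesis by linarith
  qed
  have "\<lceil>(of_nat b :: rat) / of_nat l\<rceil> = int D + 1"
  proof (subst ceiling_eq_iff, intro conjI)
    have "D * l < b" using d1 False by linarith
    then have "(of_nat (D * l) :: rat) < of_nat b" by (simp only: of_nat_less_iff)
    then have "(of_nat D :: rat) * of_nat l < of_nat b" by simp
    then show "of_int (int D + 1) - 1 < (of_nat b :: rat) / of_nat l"
      using lp by (simp add: less_divide_eq)
    have "b \<le> D * l + l" using d2 False by linarith
    then have "(of_nat b :: rat) \<le> of_nat (D * l + l)" by (simp only: of_nat_le_iff)
    also have "(of_nat (D * l + l) :: rat) = (of_nat D + 1) * of_nat l" by (simp add: algebra_simps)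
    finally show "(of_nat b :: rat) / of_nat l \<le> of_int (int D + 1)"
      using lp by (simp add: divide_le_eq)
  qed
  then show ?thesis using False by (simp add: D_def)
qed

lemma floor_nat: "nat \<lfloor>(of_nat (a + 1) :: rat) / of_nat l\<rfloor> = (a + 1) div l"
  by (simp only: floor_divide_of_nat_eq nat_int)

lemma mset_map_upt: "mset (map f [1..<n + 1]) = image_mset f (mset_set {1..n})"
proof -
  have e: "{1..<n + 1} = {1..n}" by auto
  have "mset (map f [1..<n + 1]) = image_mset f (mset [1..<n + 1])" by (rule mset_map)
  also have "mset [1..<n + 1] = mset_set {1..n}" unfolding mset_upt e ..
  finally show ?thesis .
qed

lemma reindex_rev:
  assumes "\<And>t. t \<in> S \<Longrightarrow> f (\<sigma> t) = g t" "inj_on \<sigma> S" "\<sigma> ` S = T" and finS: "finite S"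
  shows "image_mset f (mset_set T) = image_mset g (mset_set S)"
proof -
  have "mset_set T = image_mset \<sigma> (mset_set S)" using assms(2,3) by (simp add: image_mset_mset_set)
  then have "image_mset f (mset_set T) = image_mset (f \<circ> \<sigma>) (mset_set S)"
    by (simp add: image_mset.compositionality)
  also have "\<dots> = image_mset g (mset_set S)"
    by (rule image_mset_cong) (use assms(1) finS in auto)
  finally show ?thesis .
qed

context
  fixes l :: nat and h :: rat and H :: "nat \<Rightarrow> rat"
  assumes l: "1 \<le> l"
begin

lemma J_char:
  fixes a b :: nat
  defines "LL \<equiv> (if b = 0 then {} else {0..(b - 1) div l})"
  shows "{j\<in>{1..int a + int b + 1}. j mod int l = int b mod int l}
       = (\<lambda>t. int b - int l * int t) ` LL \<union> (\<lambda>t. int b + int l * int t) ` {1..(a + 1) div l}"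
proof (intro set_eqI iffI)
  fix j assume "j \<in> {j\<in>{1..int a + int b + 1}. j mod int l = int b mod int l}"
  then have j: "1 \<le> j" "j \<le> int a + int b + 1" "j mod int l = int b mod int l" by auto
  have "int l dvd int b - j" using j(3) mod_eq_dvd_iff[of "int b" "int l" j] by simp
  then obtain k where k: "int b - j = int l * k" by (auto simp: dvd_def)
  have lp: "0 < int l" using l by simp
  show "j \<in> (\<lambda>t. int b - int l * int t) ` LL \<union> (\<lambda>t. int b + int l * int t) ` {1..(a + 1) div l}"
  proof (cases "j \<le> int b")
    case True
    have "0 \<le> int l * k" using k True by simp
    then have k0: "0 \<le> k" using lp by (simp add: zero_le_mult_iff)
    have b1: "b \<noteq> 0" using True j by simp
    have "int (l * nat k) \<le> int (b - 1)" using k k0 j(1) b1 by (simp add: of_nat_diff)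
    then have "nat k * l \<le> b - 1" by (simp only: of_nat_le_iff mult.commute)
    then have "nat k \<le> (b - 1) div l" using l by (simp add: less_eq_div_iff_mult_less_eq)
    then have "nat k \<in> LL" using b1 by (simp add: LL_def)
    moreover have "j = int b - int l * int (nat k)" using k k0 by simp
    ultimately show ?thesis by blast
  next
    case False
    have "int l * k < 0" using k False by simp
    then have k0: "k < 0" using lp by (simp add: mult_less_0_iff)
    have "int (l * nat (- k)) \<le> int (a + 1)" using k k0 j(2) by simp
    then have "nat (- k) * l \<le> a + 1" by (simp only: of_nat_le_iff mult.commute)
    then have "nat (- k) \<le> (a + 1) div l" using l by (simp add: less_eq_div_iff_mult_less_eq)
    moreover have "1 \<le> nat (- k)" using k0 by simp
    ultimately have tt: "nat (- k) \<in> {1..(a + 1) div l}" by simp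
    have jj: "j = int b + int l * int (nat (- k))" using k k0 by simp
    show ?thesis by (intro UnI2 rev_image_eqI[where f="\<lambda>t. int b + int l * int t", OF tt jj])
  qed
next
  fix j assume j: "j \<in> (\<lambda>t. int b - int l * int t) ` LL \<union> (\<lambda>t. int b + int l * int t) ` {1..(a + 1) div l}"
  show "j \<in> {j\<in>{1..int a + int b + 1}. j mod int l = int b mod int l}"
  proof (cases "j \<in> (\<lambda>t. int b - int l * int t) ` LL")
    case True
    then obtain t where t: "t \<in> LL" "j = int b - int l * int t" by auto
    have b1: "b \<noteq> 0" using t(1) by (simp add: LL_def split: if_splits)
    have "t \<le> (b - 1) div l" using t(1) b1 by (simp add: LL_def)
    then have "t * l \<le> b - 1" using l by (simp add: less_eq_div_iff_mult_less_eq)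
    then have "int l * int t \<le> int b - 1" using b1 by (simp add: of_nat_diff mult.commute flip: of_nat_mult)
    moreover have "0 \<le> int l * int t" by simp
    then have "- (int l * int t) \<le> int a + 1" by linarith
    ultimately show ?thesis using t(2) by (simp add: mod_sub_mult)
  next
    case False
    then obtain t where t: "t \<in> {1..(a + 1) div l}" "j = int b + int l * int t" using j by auto
    have "t * l \<le> a + 1" using t(1) l by (simp add: less_eq_div_iff_mult_less_eq)
    then have "int l * int t \<le> int a + 1" by (simp add: mult.commute flip: of_nat_mult)
    moreover have "1 \<le> int l * int t"
    proof -
      have "1 \<le> l * t" using t(1) l by (simp add: Suc_le_eq)
      then have "1 \<le> int (l * t)" by linarith
      then show ?thesis by simp
    qed
    ultimately show ?thesis using t(2) by simp
  qed
qed

lemma eig_hook: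
  fixes a b :: nat
  shows "mset (map (alpha l h H (int b + 1) (int a + int b + 1))
           (filter (\<lambda>j. j mod int l = int b mod int l) [1..int a + int b + 1]))
       = mset (map (\<lambda>j. ee'' l h H (a mod l) + (of_nat j - 1) * h) [1..<nat \<lfloor>(of_nat (a + 1) :: rat) / of_nat l\<rfloor> + 1])
       + mset (map (\<lambda>j. ee' h H (b mod l) - (of_nat j - 1) * h) [1..<nat \<lceil>(of_nat b :: rat) / of_nat l\<rceil> + 1])"
proof -
  let ?\<alpha> = "alpha l h H (int b + 1) (int a + int b + 1)"
  define A where "A = (a + 1) div l"
  define LL where "LL = (if b = 0 then {} else {0..(b - 1) div l})"
  define gL where "gL = (\<lambda>t::nat. int b - int l * int t)"
  define gA where "gA = (\<lambda>t::nat. int b + int l * int t)"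
  have lp: "0 < int l" using l by simp
  have J: "{j\<in>{1..int a + int b + 1}. j mod int l = int b mod int l} = gL ` LL \<union> gA ` {1..A}"
    unfolding LL_def gL_def gA_def A_def by (rule J_char)
  have lhs: "mset (map ?\<alpha> (filter (\<lambda>j. j mod int l = int b mod int l) [1..int a + int b + 1]))
      = image_mset ?\<alpha> (mset_set {j\<in>{1..int a + int b + 1}. j mod int l = int b mod int l})"
  proof -
    have "mset [1..int a + int b + 1] = mset_set {1..int a + int b + 1}"
      using mset_set_set[OF distinct_upto[of 1 "int a + int b + 1"]] by simp
    then show ?thesis by (simp add: mset_filter filter_mset_mset_set)
  qed
  have injL: "inj_on gL LL" using lp by (auto simp: inj_on_def gL_def)
  have injA: "inj_on gA {1..A}" using lp by (auto simp: inj_on_def gA_def)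
  have disj: "gL ` LL \<inter> gA ` {1..A} = {}"
  proof (rule ccontr)
    assume "gL ` LL \<inter> gA ` {1..A} \<noteq> {}"
    then obtain t s where ts: "gL t = gA s" "1 \<le> s" by auto
    then have "int l * (int t + int s) = 0" by (simp add: gL_def gA_def algebra_simps)
    then show False using lp ts(2) by simp
  qed
  have split: "image_mset ?\<alpha> (mset_set (gL ` LL \<union> gA ` {1..A}))
      = image_mset (?\<alpha> \<circ> gL) (mset_set LL) + image_mset (?\<alpha> \<circ> gA) (mset_set {1..A})"
    using disj injL injA
    by (simp add: mset_set_Union LL_def image_mset_mset_set[symmetric] image_mset.compositionality)
  have arm: "image_mset (?\<alpha> \<circ> gA) (mset_set {1..A})
      = mset (map (\<lambda>j. ee'' l h H (a mod l) + (of_nat j - 1) * h) [1..<nat \<lfloor>(of_nat (a + 1) :: rat) / of_nat l\<rfloor> + 1])"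
  proof -
    have "mset (map (\<lambda>j. ee'' l h H (a mod l) + (of_nat j - 1) * h) [1..<nat \<lfloor>(of_nat (a + 1) :: rat) / of_nat l\<rfloor> + 1])
        = image_mset (\<lambda>j. ee'' l h H (a mod l) + (of_nat j - 1) * h) (mset_set {1..A})"
      by (simp only: floor_nat mset_map_upt A_def)
    also have "\<dots> = image_mset (?\<alpha> \<circ> gA) (mset_set {1..A})"
    proof (rule reindex_rev[where \<sigma>="\<lambda>t. A + 1 - t"])
      fix t assume t: "t \<in> {1..A}"
      have "(?\<alpha> \<circ> gA) t = ee'' l h H (a mod l) + of_nat (A - t) * h"
        using alpha_arm_val[OF l, where t=t and a=a and b=b] t by (simp add: gA_def A_def)
      moreover have "(of_nat (A + 1 - t) :: rat) - 1 = of_nat (A - t)" using t by (simp add: of_nat_diff)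
      ultimately show "ee'' l h H (a mod l) + (of_nat (A + 1 - t) - 1) * h = (?\<alpha> \<circ> gA) t" by simp
    next
      show "inj_on (\<lambda>t. A + 1 - t) {1..A}" by (auto simp: inj_on_def)
      show "(\<lambda>t. A + 1 - t) ` {1..A} = {1..A}"
      proof (intro set_eqI iffI)
        fix x assume "x \<in> {1..A}" then show "x \<in> (\<lambda>t. A + 1 - t) ` {1..A}"
          by (intro image_eqI[of _ _ "A + 1 - x"]) auto
      qed auto
    qed simp
    finally show ?thesis by simp
  qed
  have leg: "image_mset (?\<alpha> \<circ> gL) (mset_set LL)
      = mset (map (\<lambda>j. ee' h H (b mod l) - (of_nat j - 1) * h) [1..<nat \<lceil>(of_nat b :: rat) / of_nat l\<rceil> + 1])"
  proof (cases "b = 0")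
    case True
    then show ?thesis by (simp add: LL_def ceil_nat[OF l])
  next
    case False
    define D where "D = (b - 1) div l"
    have LLD: "LL = {0..D}" using False by (simp add: LL_def D_def)
    have "mset (map (\<lambda>j. ee' h H (b mod l) - (of_nat j - 1) * h) [1..<nat \<lceil>(of_nat b :: rat) / of_nat l\<rceil> + 1])
        = image_mset (\<lambda>j. ee' h H (b mod l) - (of_nat j - 1) * h) (mset_set {1..D + 1})"
      using False by (simp only: ceil_nat[OF l] mset_map_upt D_def if_False)
    also have "\<dots> = image_mset (?\<alpha> \<circ> gL) (mset_set LL)"
    proof (rule reindex_rev[where \<sigma>="\<lambda>t. D + 1 - t"])
      fix t assume t: "t \<in> LL"
      then have tD: "t \<le> D" by (simp add: LLD)
      have "(?\<alpha> \<circ> gL) t = ee' h H (b mod l) - of_nat (D - t) * h"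
        using alpha_leg_val[OF l, where b=b and t=t and a=a] tD False by (simp add: gL_def D_def)
      moreover have "(of_nat (D + 1 - t) :: rat) - 1 = of_nat (D - t)" using tD by (simp add: of_nat_diff)
      ultimately show "ee' h H (b mod l) - (of_nat (D + 1 - t) - 1) * h = (?\<alpha> \<circ> gL) t" by simp
    next
      show "inj_on (\<lambda>t. D + 1 - t) LL" by (auto simp: inj_on_def LLD)
      show "(\<lambda>t. D + 1 - t) ` LL = {1..D + 1}"
      proof (intro set_eqI iffI)
        fix x assume "x \<in> {1..D + 1}" then show "x \<in> (\<lambda>t. D + 1 - t) ` LL"
          by (intro image_eqI[of _ _ "D + 1 - x"]) (auto simp: LLD)
      qed (auto simp: LLD)
    qed (simp add: LLD)
    finally show ?thesis by simp
  qed
  show ?thesis unfolding lhs J split arm leg by (simp add: add.commute)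
qed

end

lemma typeA_mod:
  assumes l: "1 \<le> l" and t: "typeA l \<mu> i = j"
  shows "int ((frob_a \<mu> i + 1) mod l) = (- int j) mod int l"
proof -
  have nn: "0 \<le> (- (int (frob_a \<mu> i) + 1)) mod int l" using l by simp
  have "int j = (- (int (frob_a \<mu> i) + 1)) mod int l" using t nn unfolding typeA_def by simp
  then have "(- int j) mod int l = (- ((- (int (frob_a \<mu> i) + 1)) mod int l)) mod int l" by simp
  also have "\<dots> = (- (- (int (frob_a \<mu> i) + 1))) mod int l" by (simp add: mod_minus_eq)
  finally show ?thesis by (simp add: of_nat_mod)
qed

lemma typeA_lt: "1 \<le> l \<Longrightarrow> typeA l \<mu> i < l"
  unfolding typeA_def by (simp add: nat_less_iff)

lemma typeL_lt: "1 \<le> l \<Longrightarrow> typeL l \<mu> i < l"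
  unfolding typeL_def by simp

lemma arm_mod_cases:
  assumes l: "1 \<le> l" and t: "typeA l \<mu> i = j"
  shows "(j = 0 \<longrightarrow> frob_a \<mu> i mod l = l - 1 \<and> (frob_a \<mu> i + 1) mod l = 0)
       \<and> (j \<noteq> 0 \<longrightarrow> frob_a \<mu> i mod l = l - j - 1 \<and> (frob_a \<mu> i + 1) mod l = l - j)"
proof -
  let ?a = "frob_a \<mu> i"
  have jl: "j < l" using typeA_lt[OF l, of \<mu> i] t by simp
  have m: "int ((?a + 1) mod l) = (- int j) mod int l" using typeA_mod[OF l t] .
  have ms: "(?a + 1) mod l = (if Suc (?a mod l) = l then 0 else Suc (?a mod l))"
    using mod_Suc[of ?a l] by simp
  show ?thesis
  proof (cases "j = 0")
    case True
    then have "(?a + 1) mod l = 0" using m by simp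
    then show ?thesis using ms True l by (auto split: if_splits)
  next
    case False
    have "(- int j) mod int l = int l - int j"
      using False jl by (simp add: zmod_zminus1_eq_if)
    then have e: "(?a + 1) mod l = l - j" using m jl by simp
    then have "Suc (?a mod l) = l - j" using ms False jl by (auto split: if_splits)
    then show ?thesis using e False by auto
  qed
qed

lemma XiA_img:
  assumes l: "1 \<le> l" and t: "typeA l \<mu> i = j"
  defines "A \<equiv> (frob_a \<mu> i + 1) div l"
  shows "XiA l h H \<mu> i = image_mset (\<lambda>c. ee H j + h * of_int c)
            (mset_set (if j = 0 then {0..int A - 1} else {1..int A}))"
proof -
  have jl: "j < l" using typeA_lt[OF l, of \<mu> i] t by simp
  have X: "XiA l h H \<mu> i = image_mset (\<lambda>k. ee'' l h H (frob_a \<mu> i mod l) + (of_nat k - 1) * h) (mset_set {1..A})"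
    unfolding XiA_def by (simp only: floor_nat mset_map_upt A_def)
  note mc = arm_mod_cases[OF l t]
  show ?thesis
  proof (cases "j = 0")
    case True
    have ee0: "ee'' l h H (frob_a \<mu> i mod l) = 0" using mc True by (simp add: ee''_def)
    have "image_mset (\<lambda>c. ee H j + h * of_int c) (mset_set {0..int A - 1}) =
          image_mset (\<lambda>k. ee'' l h H (frob_a \<mu> i mod l) + (of_nat k - 1) * h) (mset_set {1..A})"
    proof (rule reindex_rev[where \<sigma>="\<lambda>k. int k - 1"])
      show "ee H j + h * of_int (int k - 1) = ee'' l h H (frob_a \<mu> i mod l) + (of_nat k - 1) * h" if "k \<in> {1..A}" for k
        using ee0 True by (simp add: ee_def algebra_simps)
      show "inj_on (\<lambda>k. int k - 1) {1..A}" by (auto simp: inj_on_def)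
      show "(\<lambda>k. int k - 1) ` {1..A} = {0..int A - 1}"
      proof (intro set_eqI iffI)
        fix c assume "c \<in> {0..int A - 1}" then show "c \<in> (\<lambda>k. int k - 1) ` {1..A}"
          by (intro image_eqI[of _ _ "nat (c + 1)"]) auto
      qed auto
    qed simp
    then show ?thesis using X True by simp
  next
    case False
    have ee1: "ee'' l h H (frob_a \<mu> i mod l) = h + ee H j"
    proof -
      have "frob_a \<mu> i mod l = l - j - 1" using mc False by simp
      moreover have "l - j - 1 \<noteq> l - 1" using False jl by simp
      moreover have "l - (l - j - 1) - 1 = j" using False jl by simp
      ultimately show ?thesis by (simp add: ee''_def ee_def)
    qed
    have "image_mset (\<lambda>c. ee H j + h * of_int c) (mset_set {1..int A}) =
          image_mset (\<lambda>k. ee'' l h H (frob_a \<mu> i mod l) + (of_nat k - 1) * h) (mset_set {1..A})"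
    proof (rule reindex_rev[where \<sigma>="\<lambda>k. int k"])
      show "ee H j + h * of_int (int k) = ee'' l h H (frob_a \<mu> i mod l) + (of_nat k - 1) * h" if "k \<in> {1..A}" for k
        using ee1 by (simp add: algebra_simps)
      show "inj_on (\<lambda>k. int k) {1..A}" by (auto simp: inj_on_def)
      show "(\<lambda>k. int k) ` {1..A} = {1..int A}"
      proof (intro set_eqI iffI)
        fix c assume "c \<in> {1..int A}" then show "c \<in> (\<lambda>k. int k) ` {1..A}"
          by (intro image_eqI[of _ _ "nat c"]) auto
      qed auto
    qed simp
    then show ?thesis using X False by simp
  qed
qed

lemma XiL_img:
  assumes l: "1 \<le> l" and t: "typeL l \<mu> i = j"
  defines "L \<equiv> nat \<lceil>(of_nat (frob_b \<mu> i) :: rat) / of_nat l\<rceil>"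
  shows "XiL l h H \<mu> i = image_mset (\<lambda>c. ee H j + h * of_int c)
            (mset_set (if j = 0 then {- int L..-1} else {1 - int L..0}))"
proof -
  have X: "XiL l h H \<mu> i = image_mset (\<lambda>k. ee' h H j - (of_nat k - 1) * h) (mset_set {1..L})"
    unfolding XiL_def using t by (simp only: mset_map_upt L_def typeL_def)
  show ?thesis
  proof (cases "j = 0")
    case True
    have "image_mset (\<lambda>c. ee H j + h * of_int c) (mset_set {- int L..-1}) =
          image_mset (\<lambda>k. ee' h H j - (of_nat k - 1) * h) (mset_set {1..L})"
    proof (rule reindex_rev[where \<sigma>="\<lambda>k. - int k"])
      show "ee H j + h * of_int (- int k) = ee' h H j - (of_nat k - 1) * h" if "k \<in> {1..L}" for k
        using True by (simp add: ee_def ee'_def algebra_simps)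
      show "inj_on (\<lambda>k. - int k) {1..L}" by (auto simp: inj_on_def)
      show "(\<lambda>k. - int k) ` {1..L} = {- int L..-1}"
      proof (intro set_eqI iffI)
        fix c assume "c \<in> {- int L..-1}" then show "c \<in> (\<lambda>k. - int k) ` {1..L}"
          by (intro image_eqI[of _ _ "nat (- c)"]) auto
      qed auto
    qed simp
    then show ?thesis using X True by simp
  next
    case False
    have "image_mset (\<lambda>c. ee H j + h * of_int c) (mset_set {1 - int L..0}) =
          image_mset (\<lambda>k. ee' h H j - (of_nat k - 1) * h) (mset_set {1..L})"
    proof (rule reindex_rev[where \<sigma>="\<lambda>k. 1 - int k"])
      show "ee H j + h * of_int (1 - int k) = ee' h H j - (of_nat k - 1) * h" if "k \<in> {1..L}" for k
        using False by (simp add: ee'_def algebra_simps)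
      show "inj_on (\<lambda>k. 1 - int k) {1..L}" by (auto simp: inj_on_def)
      show "(\<lambda>k. 1 - int k) ` {1..L} = {1 - int L..0}"
      proof (intro set_eqI iffI)
        fix c assume "c \<in> {1 - int L..0}" then show "c \<in> (\<lambda>k. 1 - int k) ` {1..L}"
          by (intro image_eqI[of _ _ "nat (1 - c)"]) auto
      qed auto
    qed simp
    then show ?thesis using X False by simp
  qed
qed

lemma size_map_upt: "size (mset (map f [1..<n + 1])) = n" by simp

lemma size_XiA: "size (XiA l h H \<mu> i) = (frob_a \<mu> i + 1) div l"
  unfolding XiA_def size_map_upt floor_nat ..

lemma size_XiL: "size (XiL l h H \<mu> i) = nat \<lceil>(of_nat (frob_b \<mu> i) :: rat) / of_nat l\<rceil>"
  unfolding XiL_def size_map_upt ..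

lemma ceil_int:
  "\<lceil>(of_nat b :: rat) / of_nat l\<rceil> = - ((- int b) div int l)"
proof -
  have "\<lceil>(of_nat b :: rat) / of_nat l\<rceil> = - \<lfloor>- ((of_nat b :: rat) / of_nat l)\<rfloor>" by (rule ceiling_def)
  also have "- ((of_nat b :: rat) / of_nat l) = of_int (- int b) / of_int (int l)" by simp
  also have "\<lfloor>(of_int (- int b) :: rat) / of_int (int l)\<rfloor> = (- int b) div int l" by (rule floor_divide_of_int_eq)
  finally show ?thesis .
qed


lemma image_mset_sum: "finite I \<Longrightarrow> image_mset f (\<Sum>i\<in>I. M i) = (\<Sum>i\<in>I. image_mset f (M i))"
  by (induction I rule: finite_induct) auto

lemma sum_const_card:
  fixes c :: "'b::comm_monoid_add"
  assumes "finite A" "finite B" "card A = card B"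
  shows "(\<Sum>i\<in>A. c) = (\<Sum>i\<in>B. c)"
proof -
  obtain f where "bij_betw f A B" using finite_same_card_bij[OF assms] by blast
  then show ?thesis using sum.reindex_bij_betw[of f A B "\<lambda>_. c"] by simp
qed

lemma mset_set_0_ins: "0 \<le> x \<Longrightarrow> mset_set {0..x} = {#0::int#} + mset_set {1..x}"
proof -
  assume x: "0 \<le> x"
  have "{0..x} = insert 0 {1..x}" using x by auto
  then show ?thesis by (simp add: add_mset_add_single[symmetric])
qed

lemma mset_set_0_ins': "mset_set {y..0} = {#0::int#} + mset_set {y..-1}" if "y \<le> 0"
proof -
  have "{y..0} = insert 0 {y..-1}" using that by auto
  then show ?thesis by (simp add: add_mset_add_single[symmetric])
qed

context
  fixes l :: nat and \<mu> :: "nat list"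
  assumes l: "1 \<le> l" and mu: "is_partition \<mu>" and ec: "empty_core l \<mu>"
begin

abbreviation "dd \<equiv> durfee \<mu>"
abbreviation "fa \<equiv> frob_a \<mu>"
abbreviation "fb \<equiv> frob_b \<mu>"
definition "AA i = (fa i + 1) div l"
definition "LL i = nat \<lceil>(of_nat (fb i) :: rat) / of_nat l\<rceil>"
definition "phi j = (- int j) mod int l"

lemma AA_eq: "typeA l \<mu> i = j \<Longrightarrow> int l * int (AA i) = int (fa i + 1) - phi j"
proof -
  assume t: "typeA l \<mu> i = j"
  have "int (fa i + 1) = int l * int (AA i) + int ((fa i + 1) mod l)"
    unfolding AA_def by (simp flip: of_nat_mult of_nat_add)
  then show ?thesis using typeA_mod[OF l t] by (simp add: phi_def)
qed

lemma LL_eq: "typeL l \<mu> i = j \<Longrightarrow> int l * int (LL i) = int (fb i) + phi j"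
proof -
  assume t: "typeL l \<mu> i = j"
  have c: "\<lceil>(of_nat (fb i) :: rat) / of_nat l\<rceil> = - ((- int (fb i)) div int l)" by (rule ceil_int)
  have nn: "0 \<le> - ((- int (fb i)) div int l)" using l by (simp add: div_nonpos_pos_le0)
  have "int (LL i) = - ((- int (fb i)) div int l)" unfolding LL_def c using nn by simp
  then have "int l * int (LL i) = - (int l * ((- int (fb i)) div int l))" by simp
  also have "int l * ((- int (fb i)) div int l) = (- int (fb i)) - (- int (fb i)) mod int l"
    by (simp add: minus_mod_eq_mult_div)
  also have "(- int (fb i)) mod int l = phi j"
  proof -
    have "int j = int (fb i mod l)" using t unfolding typeL_def by simp
    also have "\<dots> = int (fb i) mod int l" by (rule of_nat_mod)
    finally have "int j = int (fb i) mod int l" .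
    then have "phi j = (- (int (fb i) mod int l)) mod int l" by (simp add: phi_def)
    also have "\<dots> = (- int (fb i)) mod int l" by (simp add: mod_minus_eq)
    finally show ?thesis by simp
  qed
  finally show ?thesis by simp
qed

lemma AA_inj: "i \<in> {1..dd} \<Longrightarrow> i' \<in> {1..dd} \<Longrightarrow> typeA l \<mu> i = j \<Longrightarrow> typeA l \<mu> i' = j \<Longrightarrow> AA i = AA i' \<Longrightarrow> i = i'"
proof -
  assume i: "i \<in> {1..dd}" "i' \<in> {1..dd}" and t: "typeA l \<mu> i = j" "typeA l \<mu> i' = j" and e: "AA i = AA i'"
  have "int (fa i + 1) = int (fa i' + 1)" using AA_eq[OF t(1)] AA_eq[OF t(2)] e by simp
  then have "fa i = fa i'" by simp
  then show "i = i'" using inj_frob_a[OF mu] i by (auto dest: inj_onD)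
qed

lemma LL_inj: "i \<in> {1..dd} \<Longrightarrow> i' \<in> {1..dd} \<Longrightarrow> typeL l \<mu> i = j \<Longrightarrow> typeL l \<mu> i' = j \<Longrightarrow> LL i = LL i' \<Longrightarrow> i = i'"
proof -
  assume i: "i \<in> {1..dd}" "i' \<in> {1..dd}" and t: "typeL l \<mu> i = j" "typeL l \<mu> i' = j" and e: "LL i = LL i'"
  have "int (fb i) = int (fb i')" using LL_eq[OF t(1)] LL_eq[OF t(2)] e by simp
  then have "fb i = fb i'" by simp
  then show "i = i'" using inj_frob_b[OF mu] i by (auto dest: inj_onD)
qed

definition "IA j = {i\<in>{1..dd}. typeA l \<mu> i = j}"
definition "IL j = {i\<in>{1..dd}. typeL l \<mu> i = j}"

definition "RHS h H j = (\<Sum>i\<in>IA j. XiA l h H \<mu> i) + (\<Sum>i\<in>IL j. XiL l h H \<mu> i)"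

lemma card_IA_IL: "j < l \<Longrightarrow> card (IA j) = card (IL j)"
  unfolding IA_def IL_def by (rule type_count_eq[OF l mu ec])

lemma exists_Pj:
  assumes j: "j < l"
  shows "\<exists>P. is_partition P \<and> shifted_res (ee H j) h P = RHS h H j"
proof -
  let ?F = "\<lambda>c. ee H j + h * of_int c"
  have finA: "finite (IA j)" and finL: "finite (IL j)" by (auto simp: IA_def IL_def)
  define M where "M = (\<Sum>i\<in>IA j. mset_set (if j = 0 then {0..int (AA i) - 1} else {1..int (AA i)}))
                    + (\<Sum>i\<in>IL j. mset_set (if j = 0 then {- int (LL i)..-1} else {1 - int (LL i)..0}))"
  have rhs: "RHS h H j = image_mset ?F M"
  proof -
    have "(\<Sum>i\<in>IA j. XiA l h H \<mu> i) = (\<Sum>i\<in>IA j. image_mset ?F (mset_set (if j = 0 then {0..int (AA i) - 1} else {1..int (AA i)})))"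
    proof (rule sum.cong)
      fix i assume "i \<in> IA j"
      then have t: "typeA l \<mu> i = j" by (simp add: IA_def)
      show "XiA l h H \<mu> i = image_mset ?F (mset_set (if j = 0 then {0..int (AA i) - 1} else {1..int (AA i)}))"
        using XiA_img[OF l t, of h H] by (simp add: AA_def)
    qed simp
    moreover have "(\<Sum>i\<in>IL j. XiL l h H \<mu> i) = (\<Sum>i\<in>IL j. image_mset ?F (mset_set (if j = 0 then {- int (LL i)..-1} else {1 - int (LL i)..0})))"
    proof (rule sum.cong)
      fix i assume "i \<in> IL j"
      then have t: "typeL l \<mu> i = j" by (simp add: IL_def)
      show "XiL l h H \<mu> i = image_mset ?F (mset_set (if j = 0 then {- int (LL i)..-1} else {1 - int (LL i)..0}))"
        using XiL_img[OF l t, of h H] by (simp add: LL_def)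
    qed simp
    ultimately show ?thesis unfolding RHS_def M_def image_mset_union
      by (simp add: image_mset_sum[OF finA] image_mset_sum[OF finL])
  qed
  have cAL: "card (IA j) = card (IL j)" using card_IA_IL[OF j] .
  have "\<exists>P. is_partition P \<and> contents P = M"
  proof (cases "j = 0")
    case True
    define SA where "SA = (\<lambda>i. AA i - 1) ` IA j"
    define SB where "SB = LL ` IL j"
    have A1: "1 \<le> AA i" if "i \<in> IA j" for i
    proof -
      have "int l * int (AA i) = int (fa i + 1)" using AA_eq[of i j] that True by (simp add: IA_def phi_def)
      then have "0 < int l * int (AA i)" by simp
      then show ?thesis by (simp add: zero_less_mult_iff)
    qed
    have injA: "inj_on (\<lambda>i. AA i - 1) (IA j)"
    proof (rule inj_onI)
      fix i i' assume ii: "i \<in> IA j" "i' \<in> IA j" "AA i - 1 = AA i' - 1"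
      have "AA i = AA i'" using A1[OF ii(1)] A1[OF ii(2)] ii(3) by linarith
      then show "i = i'" using AA_inj[of i i' j] ii(1,2) by (simp add: IA_def)
    qed
    have injL: "inj_on LL (IL j)"
    proof (rule inj_onI)
      fix i i' assume ii: "i \<in> IL j" "i' \<in> IL j" "LL i = LL i'"
      then show "i = i'" using LL_inj[of i i' j] by (simp add: IL_def)
    qed
    have cards: "card SA = card SB" using cAL injA injL by (simp add: SA_def SB_def card_image)
    obtain P where P: "is_partition P"
      "contents P = (\<Sum>\<alpha>\<in>SA. mset_set {0..int \<alpha>}) + (\<Sum>\<beta>\<in>SB. mset_set {- int \<beta>..-1})"
    proof -
      have "finite SA" "finite SB" using finA finL by (simp_all add: SA_def SB_def)
      from frob_exists[OF this cards] show ?thesis using that by blast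
    qed
    have "(\<Sum>\<alpha>\<in>SA. mset_set {0..int \<alpha>}) = (\<Sum>i\<in>IA j. mset_set {0..int (AA i - 1)})"
      unfolding SA_def by (rule sum.reindex_cong[OF injA refl]) simp
    also have "\<dots> = (\<Sum>i\<in>IA j. mset_set (if j = 0 then {0..int (AA i) - 1} else {1..int (AA i)}))"
      by (rule sum.cong) (use A1 True in \<open>auto simp: of_nat_diff\<close>)
    finally have a: "(\<Sum>\<alpha>\<in>SA. mset_set {0..int \<alpha>}) = (\<Sum>i\<in>IA j. mset_set (if j = 0 then {0..int (AA i) - 1} else {1..int (AA i)}))" .
    have b: "(\<Sum>\<beta>\<in>SB. mset_set {- int \<beta>..-1}) = (\<Sum>i\<in>IL j. mset_set (if j = 0 then {- int (LL i)..-1} else {1 - int (LL i)..0}))"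
      unfolding SB_def using True by (intro sum.reindex_cong[OF injL refl]) simp
    have "M = (\<Sum>i\<in>IA j. mset_set (if j = 0 then {0..int (AA i) - 1} else {1..int (AA i)}))
                    + (\<Sum>i\<in>IL j. mset_set (if j = 0 then {- int (LL i)..-1} else {1 - int (LL i)..0}))"
      by (simp only: M_def)
    then have "contents P = M" unfolding P(2) a b by simp
    then show ?thesis using P(1) by blast
  next
    case False
    define SA where "SA = AA ` IA j"
    define SB where "SB = (\<lambda>i. LL i - 1) ` IL j"
    have L1: "1 \<le> LL i" if "i \<in> IL j" for i
    proof -
      have t: "typeL l \<mu> i = j" using that by (simp add: IL_def)
      have "1 \<le> fb i" using t False unfolding typeL_def by (cases "fb i") auto
      moreover have "0 \<le> phi j" using l by (simp add: phi_def)
      ultimately have "0 < int l * int (LL i)" using LL_eq[OF t] by simp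
      then show ?thesis by (simp add: zero_less_mult_iff)
    qed
    have injA: "inj_on AA (IA j)"
    proof (rule inj_onI)
      fix i i' assume ii: "i \<in> IA j" "i' \<in> IA j" "AA i = AA i'"
      then show "i = i'" using AA_inj[of i i' j] by (simp add: IA_def)
    qed
    have injL: "inj_on (\<lambda>i. LL i - 1) (IL j)"
    proof (rule inj_onI)
      fix i i' assume ii: "i \<in> IL j" "i' \<in> IL j" "LL i - 1 = LL i' - 1"
      have "LL i = LL i'" using L1[OF ii(1)] L1[OF ii(2)] ii(3) by linarith
      then show "i = i'" using LL_inj[of i i' j] ii(1,2) by (simp add: IL_def)
    qed
    have cards: "card SA = card SB" using cAL injA injL by (simp add: SA_def SB_def card_image)
    obtain P where P: "is_partition P"
      "contents P = (\<Sum>\<alpha>\<in>SA. mset_set {0..int \<alpha>}) + (\<Sum>\<beta>\<in>SB. mset_set {- int \<beta>..-1})"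
    proof -
      have "finite SA" "finite SB" using finA finL by (simp_all add: SA_def SB_def)
      from frob_exists[OF this cards] show ?thesis using that by blast
    qed
    have a: "(\<Sum>\<alpha>\<in>SA. mset_set {0..int \<alpha>}) = (\<Sum>i\<in>IA j. {#0#}) + (\<Sum>i\<in>IA j. mset_set {1..int (AA i)})"
    proof -
      have "(\<Sum>\<alpha>\<in>SA. mset_set {0..int \<alpha>}) = (\<Sum>i\<in>IA j. {#0#} + mset_set {1..int (AA i)})"
        unfolding SA_def by (rule sum.reindex_cong[OF injA refl]) (simp add: mset_set_0_ins)
      then show ?thesis by (simp only: sum.distrib)
    qed
    have b: "(\<Sum>\<beta>\<in>SB. mset_set {- int \<beta>..-1}) = (\<Sum>i\<in>IL j. mset_set {1 - int (LL i)..-1})"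
      unfolding SB_def
      by (rule sum.reindex_cong[OF injL refl]) (use L1 in \<open>auto simp: of_nat_diff\<close>)
    have c: "(\<Sum>i\<in>IL j. mset_set {1 - int (LL i)..0}) = (\<Sum>i\<in>IL j. {#0#}) + (\<Sum>i\<in>IL j. mset_set {1 - int (LL i)..-1})"
    proof -
      have "(\<Sum>i\<in>IL j. mset_set {1 - int (LL i)..0}) = (\<Sum>i\<in>IL j. {#0#} + mset_set {1 - int (LL i)..-1})"
      proof (rule sum.cong)
        fix i assume "i \<in> IL j"
        then have "1 - int (LL i) \<le> 0" using L1 by fastforce
        then show "mset_set {1 - int (LL i)..0} = {#0#} + mset_set {1 - int (LL i)..-1}"
          by (rule mset_set_0_ins')
      qed simp
      then show ?thesis by (simp only: sum.distrib)
    qed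
    have z: "(\<Sum>i\<in>IA j. {#0::int#}) = (\<Sum>i\<in>IL j. {#0#})" by (rule sum_const_card[OF finA finL cAL])
    have M': "M = (\<Sum>i\<in>IA j. mset_set {1..int (AA i)}) + (\<Sum>i\<in>IL j. mset_set {1 - int (LL i)..0})"
      unfolding M_def using False by simp
    have "contents P = M"
      unfolding P(2) a b M' c z by (simp only: add.assoc add.commute add.left_commute)
    then show ?thesis using P(1) by blast
  qed
  then obtain P where P: "is_partition P" "contents P = M" by blast
  have "shifted_res (ee H j) h P = RHS h H j" unfolding shifted_res_def P(2) rhs ..
  then show ?thesis using P(1) by blast
qed

end

lemma sum_group_lt:
  assumes "finite S" "\<And>x. x \<in> S \<Longrightarrow> t x < (l::nat)"
  shows "(\<Sum>j<l. \<Sum>x\<in>{x\<in>S. t x = j}. f x) = (\<Sum>x\<in>S. f x)"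
  by (rule sum.group) (use assms in auto)

context
  fixes l :: nat and \<mu> :: "nat list"
  assumes l: "1 \<le> l" and mu: "is_partition \<mu>" and ec: "empty_core l \<mu>"
begin

lemma size_sum:
  assumes ps: "psize \<mu> = n * l"
  shows "(\<Sum>i\<in>{1..durfee \<mu>}. AA l \<mu> i + LL l \<mu> i) = n"
proof -
  let ?I = "{1..durfee \<mu>}"
  have "psize \<mu> = size (contents \<mu>)" by (simp add: size_contents)
  also have "\<dots> = (\<Sum>i\<in>?I. frob_a \<mu> i + frob_b \<mu> i + 1)"
  proof -
    have "size (contents \<mu>) = (\<Sum>i\<in>?I. size (mset_set {- int (frob_b \<mu> i)..int (frob_a \<mu> i)}))"
      unfolding contents_frob[OF mu] by (rule size_multiset_sum)
    also have "\<dots> = (\<Sum>i\<in>?I. frob_a \<mu> i + frob_b \<mu> i + 1)"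
      by (rule sum.cong) (simp_all add: nat_add_distrib)
    finally show ?thesis .
  qed
  finally have p: "(\<Sum>i\<in>?I. frob_a \<mu> i + frob_b \<mu> i + 1) = n * l" using ps by simp
  have each: "int l * int (AA l \<mu> i + LL l \<mu> i) = int (frob_a \<mu> i + frob_b \<mu> i + 1) - phi l (typeA l \<mu> i) + phi l (typeL l \<mu> i)" for i
    using AA_eq[OF l mu ec refl, of i] LL_eq[OF l mu ec refl, of i] by (simp add: algebra_simps)
  have grA: "(\<Sum>i\<in>?I. phi l (typeA l \<mu> i)) = (\<Sum>j<l. of_nat (card (IA l \<mu> j)) * phi l j)"
  proof -
    have "(\<Sum>i\<in>?I. phi l (typeA l \<mu> i)) = (\<Sum>j<l. \<Sum>i\<in>{i\<in>?I. typeA l \<mu> i = j}. phi l (typeA l \<mu> i))"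
      by (rule sum_group_lt[symmetric]) (use typeA_lt[OF l] in auto)
    also have "\<dots> = (\<Sum>j<l. of_nat (card (IA l \<mu> j)) * phi l j)"
      by (rule sum.cong) (simp_all add: IA_def[OF l mu ec])
    finally show ?thesis .
  qed
  have grL: "(\<Sum>i\<in>?I. phi l (typeL l \<mu> i)) = (\<Sum>j<l. of_nat (card (IL l \<mu> j)) * phi l j)"
  proof -
    have "(\<Sum>i\<in>?I. phi l (typeL l \<mu> i)) = (\<Sum>j<l. \<Sum>i\<in>{i\<in>?I. typeL l \<mu> i = j}. phi l (typeL l \<mu> i))"
      by (rule sum_group_lt[symmetric]) (use typeL_lt[OF l] in auto)
    also have "\<dots> = (\<Sum>j<l. of_nat (card (IL l \<mu> j)) * phi l j)"
      by (rule sum.cong) (simp_all add: IL_def[OF l mu ec])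
    finally show ?thesis .
  qed
  have eqAL: "(\<Sum>i\<in>?I. phi l (typeA l \<mu> i)) = (\<Sum>i\<in>?I. phi l (typeL l \<mu> i))"
    unfolding grA grL by (rule sum.cong) (simp_all add: card_IA_IL[OF l mu ec])
  have "int l * int (\<Sum>i\<in>?I. AA l \<mu> i + LL l \<mu> i) = (\<Sum>i\<in>?I. int l * int (AA l \<mu> i + LL l \<mu> i))"
    by (simp add: sum_distrib_left)
  also have "\<dots> = (\<Sum>i\<in>?I. int (frob_a \<mu> i + frob_b \<mu> i + 1)) - (\<Sum>i\<in>?I. phi l (typeA l \<mu> i)) + (\<Sum>i\<in>?I. phi l (typeL l \<mu> i))"
    unfolding each by (simp add: sum.distrib sum_subtractf)
  also have "\<dots> = int (n * l)"
  proof -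
    have p': "(\<Sum>i\<in>?I. int (frob_a \<mu> i + frob_b \<mu> i + 1)) = int (n * l)"
      using arg_cong[OF p, of int] by (simp only: of_nat_sum)
    show ?thesis using eqAL p' by linarith
  qed
  finally have "int l * int (\<Sum>i\<in>?I. AA l \<mu> i + LL l \<mu> i) = int l * int n" by simp
  moreover define S where "S = (\<Sum>i\<in>?I. AA l \<mu> i + LL l \<mu> i)"
  ultimately have "int l * int S = int l * int n" by simp
  then have "S = n" using l by simp
  then show ?thesis by (simp add: S_def)
qed

lemma eig_i_split: "Eig_i l h H \<mu> i = XiA l h H \<mu> i + XiL l h H \<mu> i"
proof -
  have "Eig_i l h H \<mu> i = mset (map (alpha l h H (int (frob_b \<mu> i) + 1) (int (frob_a \<mu> i) + int (frob_b \<mu> i) + 1))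
           (filter (\<lambda>j. j mod int l = int (frob_b \<mu> i) mod int l) [1..int (frob_a \<mu> i) + int (frob_b \<mu> i) + 1]))"
    by (simp add: Eig_i_def Let_def)
  also have "\<dots> = XiA l h H \<mu> i + XiL l h H \<mu> i"
    unfolding XiA_def XiL_def by (rule eig_hook[OF l])
  finally show ?thesis .
qed

lemma regroup: "(\<Sum>j<l. RHS l \<mu> h H j) = Eig l h H \<mu>"
proof -
  have fin: "finite {1..durfee \<mu>}" by simp
  have "(\<Sum>j<l. RHS l \<mu> h H j) = (\<Sum>j<l. \<Sum>i\<in>IA l \<mu> j. XiA l h H \<mu> i) + (\<Sum>j<l. \<Sum>i\<in>IL l \<mu> j. XiL l h H \<mu> i)"
    unfolding RHS_def[OF l mu ec] by (simp add: sum.distrib)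
  also have "(\<Sum>j<l. \<Sum>i\<in>IA l \<mu> j. XiA l h H \<mu> i) = (\<Sum>i\<in>{1..durfee \<mu>}. XiA l h H \<mu> i)"
    unfolding IA_def[OF l mu ec] by (rule sum_group_lt[OF fin]) (rule typeA_lt[OF l])
  also have "(\<Sum>j<l. \<Sum>i\<in>IL l \<mu> j. XiL l h H \<mu> i) = (\<Sum>i\<in>{1..durfee \<mu>}. XiL l h H \<mu> i)"
    unfolding IL_def[OF l mu ec] by (rule sum_group_lt[OF fin]) (rule typeL_lt[OF l])
  also have "(\<Sum>i\<in>{1..durfee \<mu>}. XiA l h H \<mu> i) + (\<Sum>i\<in>{1..durfee \<mu>}. XiL l h H \<mu> i) = Eig l h H \<mu>"
    unfolding Eig_def eig_i_split by (simp add: sum.distrib)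
  finally show ?thesis .
qed

lemma size_RHS_sum:
  assumes ps: "psize \<mu> = n * l"
  shows "(\<Sum>j<l. size (RHS l \<mu> h H j)) = n"
proof -
  have fin: "finite {1..durfee \<mu>}" by simp
  have "(\<Sum>j<l. size (RHS l \<mu> h H j)) = (\<Sum>j<l. \<Sum>i\<in>IA l \<mu> j. AA l \<mu> i) + (\<Sum>j<l. \<Sum>i\<in>IL l \<mu> j. LL l \<mu> i)"
    unfolding RHS_def[OF l mu ec] by (simp add: size_multiset_sum size_XiA size_XiL AA_def[OF l mu ec] LL_def[OF l mu ec] sum.distrib)
  also have "(\<Sum>j<l. \<Sum>i\<in>IA l \<mu> j. AA l \<mu> i) = (\<Sum>i\<in>{1..durfee \<mu>}. AA l \<mu> i)"
    unfolding IA_def[OF l mu ec] by (rule sum_group_lt[OF fin]) (rule typeA_lt[OF l])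
  also have "(\<Sum>j<l. \<Sum>i\<in>IL l \<mu> j. LL l \<mu> i) = (\<Sum>i\<in>{1..durfee \<mu>}. LL l \<mu> i)"
    unfolding IL_def[OF l mu ec] by (rule sum_group_lt[OF fin]) (rule typeL_lt[OF l])
  finally show ?thesis using size_sum[OF ps] by (simp add: sum.distrib)
qed

end

lemma length_le_sum: "0 \<notin> set p \<Longrightarrow> length p \<le> sum_list (p::nat list)"
  by (induction p) auto

lemma content_bound:
  assumes p: "is_partition p" and c: "c \<in># contents p"
  shows "\<bar>c\<bar> \<le> int (psize p)"
proof -
  obtain i k where ik: "(i, k) \<in> diagram p" "c = int k - int i"
    using c unfolding contents_def by auto
  have i: "1 \<le> i" "i \<le> length p" "1 \<le> k" "k \<le> part p i" using ik by (auto simp: diagram_def)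
  have "length p \<le> psize p" using p length_le_sum by (simp add: is_partition_def psize_def)
  moreover have "part p i \<le> psize p"
  proof -
    have "part p i = p ! (i - 1)" using i by (simp add: part_def)
    moreover have "p ! (i - 1) \<in> set p" using i by simp
    ultimately show ?thesis unfolding psize_def by (metis member_le_sum_list zero_le)
  qed
  ultimately show ?thesis using i ik by linarith
qed

lemma filter_mset_sum: "finite I \<Longrightarrow> filter_mset P (\<Sum>i\<in>I. M i) = (\<Sum>i\<in>I. filter_mset P (M i))"
  by (induction I rule: finite_induct) auto

lemma filter_all: "(\<And>x. x \<in># M \<Longrightarrow> P x) \<Longrightarrow> filter_mset P M = M"
  by (induction M) auto

lemma ee_split: "j \<le> j' \<Longrightarrow> ee H j' = ee H j + (\<Sum>s\<in>{Suc j..j'}. H s)"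
proof -
  assume jj: "j \<le> j'"
  have "{1..j'} = {1..j} \<union> {Suc j..j'}" using jj by auto
  moreover have "{1..j} \<inter> {Suc j..j'} = {}" by auto
  ultimately show ?thesis unfolding ee_def by (simp add: sum.union_disjoint)
qed

theorem lemma7p2:
  fixes l n :: nat
  assumes "1 \<le> l"
  shows "\<exists>B. finite B \<and> (\<forall>f\<in>B. proper_form l f) \<and>
    (\<forall>h H. (\<forall>f\<in>B. eval_form l f h H \<noteq> 0) \<longrightarrow>
      (\<forall>\<mu>\<in>P_empty l (n * l). \<forall>j<l.
         shifted_res (ee H j) h (EigMP l n h H \<mu> j)
         = (\<Sum>i\<in>{i\<in>{1..durfee \<mu>}. typeA l \<mu> i = j}. XiA l h H \<mu> i)
           + (\<Sum>i\<in>{i\<in>{1..durfee \<mu>}. typeL l \<mu> i = j}. XiL l h H \<mu> i)))"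
proof -
  note l = assms
  define idx where "idx = {(j, j', d). j < j' \<and> j' < l \<and> d \<in> {- 2 * int n..2 * int n}}"
  define form where "form = (\<lambda>(j::nat, j'::nat, d::int).
      ((0::rat), (of_int d :: rat), (\<lambda>s::nat. if j < s \<and> s \<le> j' then (-1::rat) else 0)))"
  define B where "B = insert ((0::rat), (1::rat), (\<lambda>_::nat. (0::rat))) (form ` idx)"
  have finB: "finite B"
  proof -
    have "idx \<subseteq> {..<l} \<times> {..<l} \<times> {- 2 * int n..2 * int n}" by (auto simp: idx_def)
    then have "finite idx" by (rule finite_subset) auto
    then show ?thesis by (simp add: B_def)
  qed
  have propB: "\<forall>f\<in>B. proper_form l f"
  proof
    fix f assume "f \<in> B"
    then consider "f = (0, 1, \<lambda>_. 0)" | x where "x \<in> idx" "f = form x" by (auto simp: B_def)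
    then show "proper_form l f"
    proof cases
      case 1 then show ?thesis by (simp add: proper_form_def)
    next
      case 2
      obtain j j' d where x: "x = (j, j', d)" by (cases x)
      have jj: "j < j'" "j' < l" using 2 x by (auto simp: idx_def)
      have w: "\<exists>i\<in>{1..l-1}. j < i \<and> i \<le> j'" using jj by (intro bexI[of _ j']) auto
      show ?thesis using 2 x w unfolding proper_form_def form_def by auto
    qed
  qed
  show ?thesis
  proof (intro exI[of _ B] conjI allI impI ballI finB)
    show "\<And>f. f \<in> B \<Longrightarrow> proper_form l f" using propB by blast
  next
    fix h :: rat and H :: "nat \<Rightarrow> rat" and \<mu> :: "nat list" and j :: nat
    assume gen: "\<forall>f\<in>B. eval_form l f h H \<noteq> 0" and muP: "\<mu> \<in> P_empty l (n * l)" and j: "j < l"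
    have mu: "is_partition \<mu>" and ps: "psize \<mu> = n * l" and ec: "empty_core l \<mu>"
      using muP by (auto simp: P_empty_def)
    have h0: "h \<noteq> 0" using gen by (simp add: B_def eval_form_def)
    have sep1: "ee H j1 + h * of_int c1 \<noteq> ee H j2 + h * of_int c2"
      if "j1 < j2" "j2 < l" "\<bar>c1\<bar> \<le> int n" "\<bar>c2\<bar> \<le> int n" for j1 j2 c1 c2
    proof -
      have "(j1, j2, c1 - c2) \<in> idx" using that by (auto simp: idx_def)
      then have "eval_form l (form (j1, j2, c1 - c2)) h H \<noteq> 0" using gen by (auto simp: B_def)
      moreover have "eval_form l (form (j1, j2, c1 - c2)) h H = (ee H j1 + h * of_int c1) - (ee H j2 + h * of_int c2)"
      proof -
        have s: "(\<Sum>i=1..l-1. (if j1 < i \<and> i \<le> j2 then (-1::rat) else 0) * H i) = - (\<Sum>s\<in>{Suc j1..j2}. H s)"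
        proof -
          have "(\<Sum>i=1..l-1. (if j1 < i \<and> i \<le> j2 then (-1::rat) else 0) * H i)
              = (\<Sum>i\<in>{1..l-1}. if i \<in> {Suc j1..j2} then - H i else 0)"
            by (rule sum.cong) auto
          also have "\<dots> = (\<Sum>i\<in>{1..l-1} \<inter> {Suc j1..j2}. - H i)"
            by (rule sum.inter_restrict[symmetric]) simp
          also have "{1..l-1} \<inter> {Suc j1..j2} = {Suc j1..j2}" using that by auto
          finally show ?thesis by (simp add: sum_negf)
        qed
        have e: "ee H j2 = ee H j1 + (\<Sum>s\<in>{Suc j1..j2}. H s)" using that by (intro ee_split) simp
        show ?thesis unfolding eval_form_def form_def using s e by (simp add: algebra_simps)
      qed
      ultimately show ?thesis by simp
    qed
    have sep: "j1 = j2 \<and> c1 = c2"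
      if "j1 < l" "j2 < l" "\<bar>c1\<bar> \<le> int n" "\<bar>c2\<bar> \<le> int n" "ee H j1 + h * of_int c1 = ee H j2 + h * of_int c2"
      for j1 j2 c1 c2
    proof -
      have "j1 = j2"
      proof (rule ccontr)
        assume "j1 \<noteq> j2"
        then consider "j1 < j2" | "j2 < j1" by linarith
        then show False
        proof cases
          case 1 then show False using sep1[of j1 j2 c1 c2] that by simp
        next
          case 2 then show False using sep1[of j2 j1 c2 c1] that by simp
        qed
      qed
      moreover have "c1 = c2" using that calculation h0 by simp
      ultimately show ?thesis by simp
    qed
    have "\<forall>j. \<exists>P. j < l \<longrightarrow> is_partition P \<and> shifted_res (ee H j) h P = RHS l \<mu> h H j"
      using exists_Pj[OF l mu ec] by blast
    then obtain PP where PP: "\<And>j. j < l \<Longrightarrow> is_partition (PP j) \<and> shifted_res (ee H j) h (PP j) = RHS l \<mu> h H j"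
      by metis
    define P where "P j = (if j < l then PP j else [])" for j
    have Pj: "is_partition (P j)" "shifted_res (ee H j) h (P j) = RHS l \<mu> h H j" if "j < l" for j
      using PP[OF that] that by (auto simp: P_def)
    have sizeP: "psize (P j) = size (RHS l \<mu> h H j)" if "j < l" for j
    proof -
      have "psize (P j) = size (contents (P j))" by (simp add: size_contents)
      also have "\<dots> = size (shifted_res (ee H j) h (P j))" by (simp add: shifted_res_def)
      finally show ?thesis using Pj(2)[OF that] by simp
    qed
    have mpP: "is_multipartition l n P"
      unfolding is_multipartition_def
    proof (intro conjI allI impI)
      show "\<And>j. j < l \<Longrightarrow> is_partition (P j)" using Pj(1) by blast
      show "\<And>j. l \<le> j \<Longrightarrow> P j = []" by (simp add: P_def)
      have "(\<Sum>j<l. psize (P j)) = (\<Sum>j<l. size (RHS l \<mu> h H j))" by (rule sum.cong) (simp_all add: sizeP)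
      also have "\<dots> = n" by (rule size_RHS_sum[OF l mu ec ps])
      finally show "(\<Sum>j<l. psize (P j)) = n" .
    qed
    have sumP: "(\<Sum>j<l. shifted_res (ee H j) h (P j)) = Eig l h H \<mu>"
    proof -
      have "(\<Sum>j<l. shifted_res (ee H j) h (P j)) = (\<Sum>j<l. RHS l \<mu> h H j)"
        by (rule sum.cong) (simp_all add: Pj(2))
      also have "\<dots> = Eig l h H \<mu>" by (rule regroup[OF l mu ec])
      finally show ?thesis .
    qed
    define V where "V k x = (\<exists>c. \<bar>c\<bar> \<le> int n \<and> x = ee H k + h * of_int c)" for k x
    have filt: "filter_mset (V k) (\<Sum>j<l. shifted_res (ee H j) h (R j)) = shifted_res (ee H k) h (R k)"
      if R: "is_multipartition l n R" and k: "k < l" for R k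
    proof -
      have inV: "V j x" if jl0: "j < l" and xin: "x \<in># shifted_res (ee H j) h (R j)" for j x
      proof -
        obtain c where c: "c \<in># contents (R j)" "x = ee H j + h * of_int c"
          using xin by (auto simp: shifted_res_def)
        have "is_partition (R j)" using R jl0 by (simp add: is_multipartition_def)
        then have "\<bar>c\<bar> \<le> int (psize (R j))" using c(1) by (rule content_bound)
        also have "psize (R j) \<le> (\<Sum>j<l. psize (R j))"
          using jl0 by (intro member_le_sum) auto
        also have "(\<Sum>j<l. psize (R j)) = n" using R by (simp add: is_multipartition_def)
        finally show ?thesis using c(2) by (auto simp: V_def)
      qed
      have "filter_mset (V k) (\<Sum>j<l. shifted_res (ee H j) h (R j))
          = (\<Sum>j<l. filter_mset (V k) (shifted_res (ee H j) h (R j)))"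
        by (simp add: filter_mset_sum)
      also have "\<dots> = (\<Sum>j<l. if j = k then shifted_res (ee H k) h (R k) else {#})"
      proof (rule sum.cong)
        fix j assume jl: "j \<in> {..<l}"
        show "filter_mset (V k) (shifted_res (ee H j) h (R j)) = (if j = k then shifted_res (ee H k) h (R k) else {#})"
        proof (cases "j = k")
          case True
          then show ?thesis using inV[of k] k by (simp add: filter_all)
        next
          case False
          have "\<not> V k x" if xin2: "x \<in># shifted_res (ee H j) h (R j)" for x
          proof
            assume "V k x"
            then obtain c where c: "\<bar>c\<bar> \<le> int n" "x = ee H k + h * of_int c" by (auto simp: V_def)
            obtain c' where c': "\<bar>c'\<bar> \<le> int n" "x = ee H j + h * of_int c'"
              using inV[of j x] jl xin2 by (auto simp: V_def)
            have "k = j" using sep[of k j c c'] c c' k jl by auto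
            then show False using False by simp
          qed
          then show ?thesis using False by (simp add: filter_mset_eq_mempty_iff)
        qed
      qed simp
      also have "\<dots> = shifted_res (ee H k) h (R k)" using k by (simp add: sum.delta)
      finally show ?thesis .
    qed
    have uniq: "Q = P" if Q: "is_multipartition l n Q \<and> (\<Sum>j<l. shifted_res (ee H j) h (Q j)) = Eig l h H \<mu>" for Q
    proof
      fix k
      show "Q k = P k"
      proof (cases "k < l")
        case False
        then show ?thesis using Q mpP by (simp add: is_multipartition_def)
      next
        case True
        have "shifted_res (ee H k) h (Q k) = shifted_res (ee H k) h (P k)"
          using filt[of Q k] filt[of P k] Q mpP sumP True by simp
        then have "image_mset (\<lambda>c. ee H k + h * of_int c) (contents (Q k))
                 = image_mset (\<lambda>c. ee H k + h * of_int c) (contents (P k))"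
          by (simp add: shifted_res_def)
        then have "contents (Q k) = contents (P k)"
          by (rule multiset.inj_map_strong[rotated]) (use h0 in simp)
        moreover have "is_partition (Q k)" "is_partition (P k)"
          using Q mpP True by (auto simp: is_multipartition_def)
        ultimately show ?thesis using contents_inj by blast
      qed
    qed
    have E: "EigMP l n h H \<mu> = P"
      unfolding EigMP_def by (rule the_equality) (use mpP sumP uniq in blast)+
    show "shifted_res (ee H j) h (EigMP l n h H \<mu> j)
         = (\<Sum>i\<in>{i\<in>{1..durfee \<mu>}. typeA l \<mu> i = j}. XiA l h H \<mu> i)
           + (\<Sum>i\<in>{i\<in>{1..durfee \<mu>}. typeL l \<mu> i = j}. XiL l h H \<mu> i)"
      using Pj(2)[OF j] unfolding E RHS_def[OF l mu ec] IA_def[OF l mu ec] IL_def[OF l mu ec] .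
  qed
qed


end
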